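(* Let $T$ be an ergodic automorphism of a standard probability Borel space $(X,\mathcal{B},\mu)$ with $\mu$ non-atomic, and let $f\in L^2(X,\mu)$ with $f\ge c$ for some $c>0$. Suppose there are measurable sets $W_n\subset X$, increasing sequences of natural numbers $\{q_n\}$, $\{q_n'\}$, real sequences $\{a_n\}$, $\{a_n'\}$, a number $0<\alpha\le 1$ and $P\in\mathcal{P}(\mathbb{R}^2)$ such that: (C1) $\mu(W_n)\to\alpha$; (C2) $\mu(W_n\triangle T^{-1}W_n)\to 0$; (C3) $\{q_n\}$ is a rigidity sequence for $T$ along $\{W_n\}$; (C4) $\{q_n'\}$ is a rigidity sequence for $T$ along $\{W_n\}$; (C5) $\{\int_{W_n}|f_n|^2d\mu\}_n$ is bounded, where $f_n=f^{(q_n)}-a_n$; (C6) $\{\int_{W_n}|f_n'|^2d\mu\}_n$ is bounded, where $f_n'=f^{(q_n')}-a_n'$; (C7) $(f_n',f_n)_*(\mu_{W_n})\to P$ weakly in $\mathcal{P}(\mathbb{R}^2)$. Let $h,h':X\to\mathbb{R}$ be measurable, $g\in L^\infty(X,\mathcal{B},\mu)$ and $\phi:\mathbb{R}^2\to\mathbb{R}$ bounded and uniformly continuous. Then \[\int_{W_n}\phi\big(f_n'(x)+h'(x),f_n(x)+h(x)\big)g(x)\,d\mu(x)\to\alpha\int_X\int_{\mathbb{R}^2}\phi\big(t+h'(x),u+h(x)\big)g(x)\,dP(t,u)\,d\mu(x).\]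
   Context: For $n\in\mathbb{Z}$: $f^{(n)}=f+f\circ T+\cdots+f\circ T^{n-1}$ for $n>0$, $f^{(0)}=0$, $f^{(n)}=-(f\circ T^{-1}+\cdots+f\circ T^{n})$ for $n<0$. $\mu_W(A)=\mu(A\cap W)/\mu(W)$ is the conditional measure. $\{q_n\}$ is a rigidity sequence for $T$ along $\{W_n\}$ if $\mu((T^{-q_n}A\triangle A)\cap W_n)\to 0$ for all $A\in\mathcal{B}$. $\mathcal{P}(\mathbb{R}^k)$ is the space of Borel probability measures on $\mathbb{R}^k$. *)

theory Defs
  imports "HOL-Probability.Probability"
begin

definition standard_borel_prob :: "'a::polish_space measure \<Rightarrow> bool" where
  "standard_borel_prob M \<longleftrightarrow> prob_space M \<and> sets M = sets (borel :: 'a measure)"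

definition is_atom :: "'a measure \<Rightarrow> 'a set \<Rightarrow> bool" where
  "is_atom M A \<longleftrightarrow> A \<in> sets M \<and> emeasure M A > 0 \<and>
     (\<forall>B\<in>sets M. B \<subseteq> A \<longrightarrow> emeasure M B = 0 \<or> emeasure M B = emeasure M A)"

definition non_atomic :: "'a measure \<Rightarrow> bool" where
  "non_atomic M \<longleftrightarrow> (\<nexists>A. is_atom M A)"

definition mp_automorphism :: "'a measure \<Rightarrow> ('a \<Rightarrow> 'a) \<Rightarrow> bool" where
  "mp_automorphism M T \<longleftrightarrow> bij_betw T (space M) (space M) \<and>
     T \<in> measurable M M \<and> the_inv_into (space M) T \<in> measurable M M \<and>
     (\<forall>A\<in>sets M. emeasure M (T -` A \<inter> space M) = emeasure M A)"

definition ergodic :: "'a measure \<Rightarrow> ('a \<Rightarrow> 'a) \<Rightarrow> bool" where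
  "ergodic M T \<longleftrightarrow> (\<forall>A\<in>sets M. T -` A \<inter> space M = A \<longrightarrow>
      emeasure M A = 0 \<or> emeasure M A = emeasure M (space M))"

definition birkhoff_sum :: "('a \<Rightarrow> 'a) \<Rightarrow> ('a \<Rightarrow> real) \<Rightarrow> nat \<Rightarrow> 'a \<Rightarrow> real" where
  "birkhoff_sum T f n x = (\<Sum>i<n. f ((T ^^ i) x))"

definition symdiff :: "'a set \<Rightarrow> 'a set \<Rightarrow> 'a set" where
  "symdiff A B = (A - B) \<union> (B - A)"

definition rigidity_along :: "'a measure \<Rightarrow> ('a \<Rightarrow> 'a) \<Rightarrow> (nat \<Rightarrow> nat) \<Rightarrow> (nat \<Rightarrow> 'a set) \<Rightarrow> bool" where
  "rigidity_along M T q W \<longleftrightarrow> (\<forall>A\<in>sets M.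
     (\<lambda>n. measure M (symdiff ((T ^^ q n) -` A \<inter> space M) A \<inter> W n)) \<longlonglongrightarrow> 0)"

definition cond_measure :: "'a measure \<Rightarrow> 'a set \<Rightarrow> 'a measure" where
  "cond_measure M W = uniform_measure M W"

definition weak_conv_measures :: "(nat \<Rightarrow> 'b::metric_space measure) \<Rightarrow> 'b measure \<Rightarrow> bool" where
  "weak_conv_measures Ps P \<longleftrightarrow> (\<forall>\<phi>::'b \<Rightarrow> real. continuous_on UNIV \<phi> \<longrightarrow> bounded (range \<phi>) \<longrightarrow>
     (\<lambda>n. \<integral>x. \<phi> x \<partial>(Ps n)) \<longlonglongrightarrow> (\<integral>x. \<phi> x \<partial>P))"

end

theory Submission
  imports Defs
begin


definition ultra :: "'a filter \<Rightarrow> bool" where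
  "ultra F \<longleftrightarrow> F \<noteq> bot \<and> (\<forall>P. eventually P F \<or> eventually (\<lambda>x. \<not> P x) F)"

lemma ultra_max:
  assumes "F \<noteq> bot" and max: "\<And>G. G \<noteq> bot \<Longrightarrow> G \<le> F \<Longrightarrow> F = G"
  shows "ultra F"
  unfolding ultra_def
proof (intro conjI allI assms(1) disjCI)
  fix P assume "\<not> (\<forall>\<^sub>Fx in F. \<not> P x)"
  then have "inf F (principal {x. P x}) \<noteq> bot"
    by (simp add: trivial_limit_def eventually_inf_principal not_eventually)
  then have F: "F = inf F (principal {x. P x})"
    by (rule max) simp
  show "eventually P F"
    by (subst F) (simp add: eventually_inf_principal)
qed

lemma ultra_exists:
  fixes F :: "'a filter"
  assumes F: "F \<noteq> bot"
  shows "\<exists>U\<le>F. ultra U"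
proof -
  let ?R = "{(b, a). a \<noteq> bot \<and> a \<le> b \<and> b \<le> F}"
  have bot_notin_R: "c \<in> Chains ?R \<Longrightarrow> bot \<notin> c" for c
    by (auto simp: Chains_def)
  have [simp]: "Field ?R = {G. G \<noteq> bot \<and> G \<le> F}"
    by (auto simp: Field_def bot_unique)
  have "\<exists>m\<in>Field ?R. \<forall>a\<in>Field ?R. (m, a) \<in> ?R \<longrightarrow> a = m"
  proof (rule Zorns_po_lemma)
    show "Partial_order ?R"
      by (auto simp: partial_order_on_def preorder_on_def
          antisym_def refl_on_def trans_def Field_def bot_unique)
    show "\<exists>u\<in>Field ?R. \<forall>a\<in>C. (a, u) \<in> ?R" if C: "C \<in> Chains ?R" for C
    proof (simp, intro exI conjI ballI)
      have Inf_C: "Inf C \<noteq> bot" "Inf C \<le> F" if "C \<noteq> {}"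
      proof -
        from C that have "Inf C = bot \<longleftrightarrow> (\<exists>x\<in>C. x = bot)"
          unfolding trivial_limit_def by (intro eventually_Inf_base) (auto simp: Chains_def)
        with C show "Inf C \<noteq> bot"
          by (simp add: bot_notin_R)
        from that obtain x where "x \<in> C" by auto
        with C show "Inf C \<le> F"
          by (auto intro!: Inf_lower2[of x] simp: Chains_def)
      qed
      then have [simp]: "inf F (Inf C) = (if C = {} then F else Inf C)"
        using C by (auto simp add: inf_absorb2)
      from C show "inf F (Inf C) \<noteq> bot"
        by (simp add: F Inf_C)
      from C show "inf F (Inf C) \<le> F"
        by (simp add: Chains_def Inf_C F)
      with C show "inf F (Inf C) \<le> x" "x \<le> F" if "x \<in> C" for x
        using that by (auto intro: Inf_lower simp: Chains_def)
    qed
  qed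
  then obtain U where U: "U \<noteq> bot" "U \<le> F" and max: "\<And>G. G \<noteq> bot \<Longrightarrow> G \<le> U \<Longrightarrow> U = G"
    by auto (metis order_trans)
  show ?thesis using U ultra_max[OF U(1) max] by blast
qed

lemma ultra_tendsto:
  fixes a :: "'b \<Rightarrow> real"
  assumes U: "ultra U" and bd: "\<And>n. \<bar>a n\<bar> \<le> C"
  shows "\<exists>l. (a \<longlongrightarrow> l) U"
proof -
  have "compact {-C..C}" by simp
  moreover have "filtermap a U \<noteq> bot" using U by (simp add: ultra_def filtermap_bot_iff)
  moreover have "eventually (\<lambda>x. x \<in> {-C..C}) (filtermap a U)"
    using bd by (auto simp: eventually_filtermap abs_le_iff intro!: always_eventually) (smt (verit) bd abs_le_iff)
  ultimately obtain l where "inf (nhds l) (filtermap a U) \<noteq> bot"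
    unfolding compact_filter by blast
  have "(a \<longlongrightarrow> l) U"
  proof (rule topological_tendstoI)
    fix S assume S: "open S" "l \<in> S"
    show "eventually (\<lambda>n. a n \<in> S) U"
    proof (rule ccontr)
      assume "\<not> eventually (\<lambda>n. a n \<in> S) U"
      then have "eventually (\<lambda>n. a n \<notin> S) U" using U by (auto simp: ultra_def)
      then have "eventually (\<lambda>x. x \<notin> S) (filtermap a U)" by (simp add: eventually_filtermap)
      moreover have "eventually (\<lambda>x. x \<in> S) (nhds l)" using S eventually_nhds by blast
      ultimately have "eventually (\<lambda>x. False) (inf (nhds l) (filtermap a U))"
        unfolding eventually_inf by blast
      then show False using \<open>inf (nhds l) (filtermap a U) \<noteq> bot\<close>
        by (simp add: trivial_limit_def)
    qed
  qed
  then show ?thesis ..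
qed




lemma aut_meas: "mp_automorphism M T \<Longrightarrow> T \<in> measurable M M"
  by (simp add: mp_automorphism_def)

lemma aut_distr: assumes "mp_automorphism M T" shows "distr M M T = M"
proof (rule measure_eqI)
  fix A assume "A \<in> sets (distr M M T)"
  then show "emeasure (distr M M T) A = emeasure M A"
    using assms by (simp add: mp_automorphism_def emeasure_distr)
qed simp

lemma aut_pow: assumes "mp_automorphism M T"
  shows "(T ^^ n) \<in> measurable M M \<and> distr M M (T ^^ n) = M"
proof (induction n)
  case 0 then show ?case by (simp add: distr_id2[OF refl] id_def)
next
  case (Suc n)
  have Tm: "T \<in> measurable M M" using assms by (simp add: mp_automorphism_def)
  have "T ^^ Suc n = T \<circ> (T ^^ n)" by simp
  moreover have "T \<circ> (T ^^ n) \<in> measurable M M" using Suc Tm by (auto intro: measurable_comp)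
  moreover have "distr M M (T \<circ> (T ^^ n)) = M"
  proof -
    have "distr M M (T \<circ> (T ^^ n)) = distr (distr M M (T ^^ n)) M T"
      by (rule distr_distr[symmetric]) (use Suc Tm in auto)
    also have "\<dots> = M" using Suc aut_distr[OF assms] by simp
    finally show ?thesis .
  qed
  ultimately show ?case by (simp add: comp_def)
qed

lemma erg_AE_invariant:
  assumes aut: "mp_automorphism M T" and erg: "ergodic M T"
    and E: "E \<in> sets M" and inv: "AE x in M. (T x \<in> E \<longleftrightarrow> x \<in> E)"
  shows "emeasure M E = 0 \<or> emeasure M E = emeasure M (space M)"
proof -
  have Tn: "\<And>n. (T ^^ n) \<in> measurable M M" using aut_pow[OF aut] by blast
  have Td: "\<And>n. distr M M (T ^^ n) = M" using aut_pow[OF aut] by blast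
  have Tm[measurable]: "T \<in> measurable M M" using aut by (simp add: mp_automorphism_def)
  note [measurable] = Tn E
  have step: "AE x in M. ((T ^^ n) x \<in> E \<longleftrightarrow> x \<in> E)" for n
  proof (induction n)
    case 0 then show ?case by simp
  next
    case (Suc n)
    have "AE x in distr M M (T ^^ n). (T x \<in> E \<longleftrightarrow> x \<in> E)" by (subst Td) (rule inv)
    then have "AE x in M. (T ((T ^^ n) x) \<in> E \<longleftrightarrow> (T ^^ n) x \<in> E)"
      by (subst (asm) AE_distr_iff) (auto intro: Tn)
    with Suc show ?case by eventually_elim simp
  qed
  then have all: "AE x in M. \<forall>n. ((T ^^ n) x \<in> E \<longleftrightarrow> x \<in> E)"
    by (simp add: AE_all_countable)
  define E' where "E' = {x \<in> space M. \<exists>k. \<forall>n\<ge>k. (T ^^ n) x \<in> E}"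
  have E'm: "E' \<in> sets M" unfolding E'_def by measurable
  have "T -` E' \<inter> space M = E'"
  proof (intro set_eqI iffI)
    fix x assume "x \<in> T -` E' \<inter> space M"
    then obtain k where x: "x \<in> space M" "\<And>n. n \<ge> k \<Longrightarrow> (T ^^ n) (T x) \<in> E"
      unfolding E'_def by auto
    have "(T ^^ n) x \<in> E" if "n \<ge> Suc k" for n
    proof -
      obtain m where m: "n = Suc m" "m \<ge> k" using \<open>n \<ge> Suc k\<close> by (cases n) auto
      show ?thesis using x(2)[OF m(2)] by (simp add: m funpow_Suc_right del: funpow.simps)
    qed
    then show "x \<in> E'" using x(1) unfolding E'_def by blast
  next
    fix x assume "x \<in> E'"
    then obtain k where x: "x \<in> space M" "\<And>n. n \<ge> k \<Longrightarrow> (T ^^ n) x \<in> E"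
      unfolding E'_def by auto
    have "(T ^^ n) (T x) \<in> E" if "n \<ge> k" for n
      using x(2)[of "Suc n"] that by (simp add: funpow_Suc_right del: funpow.simps)
    moreover have "T x \<in> space M" using x(1) measurable_space[OF Tm] by blast
    ultimately show "x \<in> T -` E' \<inter> space M" using x(1) unfolding E'_def by auto
  qed
  then have "emeasure M E' = 0 \<or> emeasure M E' = emeasure M (space M)"
    using erg E'm by (simp add: ergodic_def)
  moreover have "emeasure M E' = emeasure M E"
  proof (rule emeasure_eq_AE)
    show "AE x in M. (x \<in> E') = (x \<in> E)"
      using all
    proof eventually_elim
      case (elim x)
      show ?case
      proof
        assume "x \<in> E'" then show "x \<in> E" unfolding E'_def using elim by auto
      next
        assume "x \<in> E" then show "x \<in> E'" unfolding E'_def using elim sets.sets_into_space[OF E] by auto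
      qed
    qed
  qed (use E'm E in auto)
  ultimately show ?thesis by simp
qed

lemma erg_le_mean:
  fixes \<rho> :: "'a \<Rightarrow> real"
  assumes P: "prob_space M" and aut: "mp_automorphism M T" and erg: "ergodic M T"
    and int: "integrable M \<rho>" and inv: "AE x in M. \<rho> (T x) = \<rho> x"
  shows "AE x in M. \<rho> x \<le> (\<integral>x. \<rho> x \<partial>M)"
proof -
  interpret prob_space M by fact
  have Tm[measurable]: "T \<in> measurable M M" using aut by (simp add: mp_automorphism_def)
  have rm[measurable]: "\<rho> \<in> borel_measurable M" using int by auto
  define c where "c = (\<integral>x. \<rho> x \<partial>M)"
  define E where "E = {x \<in> space M. c < \<rho> x}"
  have Em: "E \<in> sets M" unfolding E_def by measurable
  have "AE x in M. (T x \<in> E \<longleftrightarrow> x \<in> E)"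
    using inv AE_space
  proof eventually_elim
    case (elim x)
    then show ?case using measurable_space[OF Tm] unfolding E_def by auto
  qed
  from erg_AE_invariant[OF aut erg Em this]
  have "emeasure M E = 0 \<or> emeasure M E = emeasure M (space M)" .
  moreover have "emeasure M E \<noteq> emeasure M (space M)"
  proof
    assume full: "emeasure M E = emeasure M (space M)"
    have "emeasure M (space M - E) = 0" using full Em by (simp add: emeasure_compl)
    then have AEE: "AE x in M. x \<in> E"
      by (intro AE_I[of _ _ "space M - E"]) (use Em in auto)
    have "(\<integral>x. \<rho> x - c \<partial>M) = (\<integral>x. \<rho> x \<partial>M) - (\<integral>x. c \<partial>M)"
      by (rule Bochner_Integration.integral_diff[OF int]) simp
    then have "(\<integral>x. \<rho> x - c \<partial>M) = 0" unfolding c_def by (simp add: prob_space)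
    moreover have "AE x in M. 0 \<le> \<rho> x - c" using AEE by eventually_elim (auto simp: E_def)
    moreover have "integrable M (\<lambda>x. \<rho> x - c)" using int by simp
    ultimately have "AE x in M. \<rho> x - c = 0"
      using integral_nonneg_eq_0_iff_AE[of M "\<lambda>x. \<rho> x - c"] by blast
    with AEE have "AE x in M. False" by eventually_elim (auto simp: E_def)
    then show False by simp
  qed
  ultimately have "emeasure M E = 0" by blast
  then have "AE x in M. x \<notin> E" by (intro AE_I[of _ _ E]) (use Em in auto)
  then show ?thesis using AE_space by eventually_elim (auto simp: E_def c_def not_less)
qed




lemma erg_const:
  fixes \<rho> :: "'a \<Rightarrow> real"
  assumes P: "prob_space M" and aut: "mp_automorphism M T" and erg: "ergodic M T"
    and int: "integrable M \<rho>"
    and inv: "\<And>A. A \<in> sets M \<Longrightarrow> set_lebesgue_integral M (T -` A \<inter> space M) \<rho> = set_lebesgue_integral M A \<rho>"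
  shows "AE x in M. \<rho> x = (\<integral>x. \<rho> x \<partial>M)"
proof -
  interpret prob_space M by fact
  have Tm[measurable]: "T \<in> measurable M M" using aut by (simp add: mp_automorphism_def)
  have Sm[measurable]: "the_inv_into (space M) T \<in> measurable M M" using aut by (simp add: mp_automorphism_def)
  have bij: "bij_betw T (space M) (space M)" using aut by (simp add: mp_automorphism_def)
  have rm[measurable]: "\<rho> \<in> borel_measurable M" using int by auto
  have D: "distr M M T = M" by (rule aut_distr[OF aut])
  have intT: "integrable M (\<lambda>x. \<rho> (T x))"
    using integrable_distr_eq[OF Tm rm] int D by simp
  have eq: "set_lebesgue_integral M B (\<lambda>x. \<rho> (T x)) = set_lebesgue_integral M B \<rho>" if B: "B \<in> sets M" for B
  proof -
    define A where "A = the_inv_into (space M) T -` B \<inter> space M"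
    have Am[measurable]: "A \<in> sets M" unfolding A_def using B by measurable
    have key: "T x \<in> A \<longleftrightarrow> x \<in> B" if x: "x \<in> space M" for x
    proof -
      have "T x \<in> space M" using x measurable_space[OF Tm] by blast
      moreover have "the_inv_into (space M) T (T x) = x"
        using bij x by (simp add: bij_betw_def the_inv_into_f_f)
      ultimately show ?thesis unfolding A_def by auto
    qed
    have pre: "T -` A \<inter> space M = B"
      using key sets.sets_into_space[OF B] by auto
    have "set_lebesgue_integral M B (\<lambda>x. \<rho> (T x)) = (\<integral>x. indicator A (T x) * \<rho> (T x) \<partial>M)"
      unfolding set_lebesgue_integral_def
      by (rule Bochner_Integration.integral_cong) (auto simp: key indicator_def)
    also have "\<dots> = (\<integral>y. indicator A y * \<rho> y \<partial>distr M M T)"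
      by (rule integral_distr[symmetric]) auto
    also have "\<dots> = set_lebesgue_integral M A \<rho>" unfolding D set_lebesgue_integral_def by simp
    also have "\<dots> = set_lebesgue_integral M B \<rho>" using inv[OF Am] pre by simp
    finally show ?thesis .
  qed
  have invae: "AE x in M. \<rho> (T x) = \<rho> x"
    by (rule density_unique_real[OF intT int eq])
  have le: "AE x in M. \<rho> x \<le> (\<integral>x. \<rho> x \<partial>M)"
    by (rule erg_le_mean[OF P aut erg int invae])
  have "AE x in M. - \<rho> x \<le> (\<integral>x. - \<rho> x \<partial>M)"
    by (rule erg_le_mean[OF P aut erg]) (use int invae in auto)
  then have ge: "AE x in M. \<rho> x \<ge> (\<integral>x. \<rho> x \<partial>M)" by simp
  from le ge show ?thesis by eventually_elim simp
qed




lemma abstract_ergodic_functional: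
  fixes L :: "nat \<Rightarrow> ('a \<Rightarrow> real) \<Rightarrow> real" and C \<beta> :: real
  assumes P: "prob_space M" and aut: "mp_automorphism M T" and erg: "ergodic M T"
    and Lbd: "\<And>n k. integrable M k \<Longrightarrow> \<bar>L n k\<bar> \<le> C * (\<integral>x. \<bar>k x\<bar> \<partial>M)"
    and Ladd: "\<And>n k1 k2. integrable M k1 \<Longrightarrow> integrable M k2 \<Longrightarrow> L n (\<lambda>x. k1 x + k2 x) = L n k1 + L n k2"
    and Lsc: "\<And>n k c. integrable M k \<Longrightarrow> L n (\<lambda>x. c * k x) = c * L n k"
    and Lcong: "\<And>n k1 k2. (\<And>x. x \<in> space M \<Longrightarrow> k1 x = k2 x) \<Longrightarrow> L n k1 = L n k2"
    and Lpos: "\<And>n k. integrable M k \<Longrightarrow> (\<And>x. x \<in> space M \<Longrightarrow> 0 \<le> k x) \<Longrightarrow> 0 \<le> L n k"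
    and L1: "(\<lambda>n. L n (\<lambda>x. 1)) \<longlonglongrightarrow> \<beta>"
    and Linv: "\<And>A. A \<in> sets M \<Longrightarrow>
        (\<lambda>n. L n (indicator (T -` A \<inter> space M)) - L n (indicator A)) \<longlonglongrightarrow> 0"
    and k: "integrable M k"
  shows "(\<lambda>n. L n k) \<longlonglongrightarrow> \<beta> * (\<integral>x. k x \<partial>M)"
proof (rule ccontr)
  interpret prob_space M by fact
  have Tm[measurable]: "T \<in> measurable M M" using aut by (simp add: mp_automorphism_def)
  assume nc: "\<not> (\<lambda>n. L n k) \<longlonglongrightarrow> \<beta> * (\<integral>x. k x \<partial>M)"
  define l where "l = \<beta> * (\<integral>x. k x \<partial>M)"
  obtain \<epsilon> where e: "\<epsilon> > 0" "\<not> eventually (\<lambda>n. dist (L n k) l < \<epsilon>) sequentially"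
    using nc unfolding l_def tendsto_iff by blast
  define F where "F = inf sequentially (principal {n. \<epsilon> \<le> dist (L n k) l})"
  have "F \<noteq> bot"
    using e(2) unfolding F_def
    by (simp add: trivial_limit_def eventually_inf_principal not_eventually not_less)
  then obtain U where UF: "U \<le> F" and U: "ultra U" using ultra_exists by blast
  have Ubot: "U \<noteq> bot" using U by (simp add: ultra_def)
  have Useq: "U \<le> sequentially" using UF unfolding F_def by (meson inf.boundedE)
  have Ubad: "eventually (\<lambda>n. \<epsilon> \<le> dist (L n k) l) U"
    using UF unfolding F_def le_filter_def by (auto simp: eventually_inf_principal)
  have ind_int: "integrable M (indicator A :: 'a \<Rightarrow> real)" if "A \<in> sets M" for A
    by (rule integrable_real_indicator) (use that in \<open>simp_all add: emeasure_eq_measure\<close>)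
  define \<Lambda> where "\<Lambda> g = Lim U (\<lambda>n. L n g)" for g
  have LamT: "((\<lambda>n. L n g) \<longlongrightarrow> \<Lambda> g) U" if g: "integrable M g" for g
  proof -
    have "\<exists>l'. ((\<lambda>n. L n g) \<longlongrightarrow> l') U"
      by (rule ultra_tendsto[OF U, of "\<lambda>n. L n g" "C * (\<integral>x. \<bar>g x\<bar> \<partial>M)"]) (rule Lbd[OF g])
    then obtain l' where l': "((\<lambda>n. L n g) \<longlongrightarrow> l') U" ..
    have "Lim U (\<lambda>n. L n g) = l'" by (rule tendsto_Lim[OF Ubot l'])
    then show ?thesis unfolding \<Lambda>_def using l' by simp
  qed
  have Lam_eq: "\<Lambda> g = x" if "integrable M g" "((\<lambda>n. L n g) \<longlongrightarrow> x) U" for g x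
    using tendsto_unique[OF Ubot LamT[OF that(1)] that(2)] .
  have Lam_add: "\<Lambda> (\<lambda>x. g1 x + g2 x) = \<Lambda> g1 + \<Lambda> g2" if "integrable M g1" "integrable M g2" for g1 g2
  proof -
    have "((\<lambda>n. L n g1 + L n g2) \<longlongrightarrow> \<Lambda> g1 + \<Lambda> g2) U" by (intro tendsto_add LamT that)
    then show ?thesis by (intro Lam_eq) (simp_all add: Ladd that)
  qed
  have Lam_sc: "\<Lambda> (\<lambda>x. c * g x) = c * \<Lambda> g" if "integrable M g" for g c
  proof -
    have "((\<lambda>n. c * L n g) \<longlongrightarrow> c * \<Lambda> g) U" by (intro tendsto_mult_left LamT that)
    then show ?thesis by (intro Lam_eq) (simp_all add: Lsc that)
  qed
  have Lam_cong: "\<Lambda> g1 = \<Lambda> g2" if "\<And>x. x \<in> space M \<Longrightarrow> g1 x = g2 x" for g1 g2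
    unfolding \<Lambda>_def using Lcong[OF that] by simp
  have Lam_bd: "\<bar>\<Lambda> g\<bar> \<le> C * (\<integral>x. \<bar>g x\<bar> \<partial>M)" if g: "integrable M g" for g
    by (rule tendsto_le[OF Ubot tendsto_const tendsto_rabs[OF LamT[OF g]]])
       (intro always_eventually allI Lbd[OF g])
  have Lam_pos: "0 \<le> \<Lambda> g" if g: "integrable M g" "\<And>x. x \<in> space M \<Longrightarrow> 0 \<le> g x" for g
    by (rule tendsto_le[OF Ubot LamT[OF g(1)] tendsto_const])
       (intro always_eventually allI Lpos[OF g])
  have Lam_diff: "\<Lambda> (\<lambda>x. g1 x - g2 x) = \<Lambda> g1 - \<Lambda> g2" if "integrable M g1" "integrable M g2" for g1 g2
  proof -
    have "\<Lambda> (\<lambda>x. g1 x - g2 x) = \<Lambda> (\<lambda>x. g1 x + (-1) * g2 x)"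
      by (rule arg_cong[where f=\<Lambda>]) (simp add: fun_eq_iff)
    also have "\<dots> = \<Lambda> g1 + \<Lambda> (\<lambda>x. (-1) * g2 x)"
      by (rule Lam_add) (use that in simp_all)
    also have "\<dots> = \<Lambda> g1 - \<Lambda> g2" using Lam_sc[OF that(2), of "-1"] by simp
    finally show ?thesis .
  qed
  have Lam1: "\<Lambda> (\<lambda>x. 1) = \<beta>"
    by (rule Lam_eq) (simp, rule tendsto_mono[OF Useq L1])
  have Lam_inv: "\<Lambda> (indicator (T -` A \<inter> space M)) = \<Lambda> (indicator A)" if A: "A \<in> sets M" for A
  proof -
    have A': "T -` A \<inter> space M \<in> sets M" using A by measurable
    have "((\<lambda>n. L n (indicator (T -` A \<inter> space M)) - L n (indicator A)) \<longlongrightarrow>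
           \<Lambda> (indicator (T -` A \<inter> space M)) - \<Lambda> (indicator A)) U"
      by (intro tendsto_diff LamT ind_int A A')
    moreover have "((\<lambda>n. L n (indicator (T -` A \<inter> space M)) - L n (indicator A)) \<longlongrightarrow> 0) U"
      by (rule tendsto_mono[OF Useq Linv[OF A]])
    ultimately have "\<Lambda> (indicator (T -` A \<inter> space M)) - \<Lambda> (indicator A) = 0"
      by (rule tendsto_unique[OF Ubot])
    then show ?thesis by simp
  qed
  have Lam_ind_bd: "\<Lambda> (indicator A) \<le> C * measure M A" if A: "A \<in> sets M" for A
  proof -
    have i: "integrable M (indicator A :: 'a \<Rightarrow> real)" using A by (rule ind_int)
    have "(\<integral>x. \<bar>indicator A x :: real\<bar> \<partial>M) = measure M A" using A by simp
    then show ?thesis using Lam_bd[OF i] by simp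
  qed
  have Lam_ind_pos: "0 \<le> \<Lambda> (indicator A)" if A: "A \<in> sets M" for A
  proof (rule Lam_pos)
    show "integrable M (indicator A :: 'a \<Rightarrow> real)" using A by (rule ind_int)
  qed (simp)
  define \<mu>' where "\<mu>' A = ennreal (\<Lambda> (indicator A))" for A
  have ind_empty: "(indicator {} :: 'a \<Rightarrow> real) = (\<lambda>x. 0)" by (simp add: fun_eq_iff)
  have Lam0: "\<Lambda> (\<lambda>x. 0) = 0" using Lam_sc[of "\<lambda>x. 0" 0] by simp
  have pos: "positive (sets M) \<mu>'"
    unfolding positive_def \<mu>'_def using Lam0 ind_empty by simp
  have ca: "countably_additive (sets M) \<mu>'"
  proof (unfold countably_additive_def, intro allI impI)
    fix A :: "nat \<Rightarrow> 'a set"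
    assume A: "range A \<subseteq> sets M" "disjoint_family A" "\<Union> (range A) \<in> sets M"
    define a where "a i = \<Lambda> (indicator (A i))" for i
    define B where "B m = (\<Union>i<m. A i)" for m
    have Bm: "B m \<in> sets M" for m using A unfolding B_def by auto
    have part: "(\<Sum>i<m. a i) = \<Lambda> (indicator (B m))" for m
    proof (induction m)
      case 0 then show ?case unfolding B_def using Lam0 ind_empty by simp
    next
      case (Suc m)
      have "(indicator (B (Suc m)) x :: real) = indicator (B m) x + indicator (A m) x" for x :: 'a
      proof -
        have "A i \<inter> A m = {}" if "i < m" for i using A(2) that unfolding disjoint_family_on_def by simp
        then have "B m \<inter> A m = {}" unfolding B_def by blast
        moreover have "B (Suc m) = B m \<union> A m" unfolding B_def by (auto simp: lessThan_Suc)
        ultimately show ?thesis by (auto simp: indicator_def)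
      qed
      then have "(indicator (B (Suc m)) :: 'a \<Rightarrow> real) = (\<lambda>x. indicator (B m) x + indicator (A m) x)"
        by (intro ext)
      then have "\<Lambda> (indicator (B (Suc m))) = \<Lambda> (\<lambda>x. indicator (B m) x + indicator (A m) x)"
        by simp
      also have "\<dots> = \<Lambda> (indicator (B m)) + a m" unfolding a_def
        using Bm A by (intro Lam_add ind_int) auto
      finally show ?case using Suc by simp
    qed
    define U' where "U' = \<Union> (range A)"
    have BU: "(\<lambda>m. measure M (B m)) \<longlonglongrightarrow> measure M U'"
    proof -
      have "(\<Union>m. B m) = U'" unfolding B_def U'_def by auto
      moreover have "(\<lambda>m. measure M (B m)) \<longlonglongrightarrow> measure M (\<Union>m. B m)"
      proof (rule Lim_measure_incseq)
        show "range B \<subseteq> sets M" using Bm by auto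
        show "incseq B" unfolding incseq_def B_def by (intro allI impI UN_mono) auto
      qed (simp add: emeasure_eq_measure)
      ultimately show ?thesis by simp
    qed
    have sums: "a sums \<Lambda> (indicator U')"
      unfolding sums_def
    proof (rule tendsto_sandwich[of "\<lambda>m. \<Lambda> (indicator U') - C * (measure M U' - measure M (B m))"
          _ _ "\<lambda>m. \<Lambda> (indicator U')"])
      have "B m \<subseteq> U'" for m unfolding B_def U'_def by auto
      have diff: "(\<Sum>i<m. a i) = \<Lambda> (indicator U') - \<Lambda> (indicator (U' - B m))" for m
      proof -
        have "(indicator U' x :: real) = indicator (B m) x + indicator (U' - B m) x" for x :: 'a
          using \<open>B m \<subseteq> U'\<close> by (auto simp: indicator_def)
        then have "(indicator U' :: 'a \<Rightarrow> real) = (\<lambda>x. indicator (B m) x + indicator (U' - B m) x)"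
          by (intro ext)
        then have "\<Lambda> (indicator U') = \<Lambda> (\<lambda>x. indicator (B m) x + indicator (U' - B m) x)"
          by simp
        also have "\<dots> = \<Lambda> (indicator (B m)) + \<Lambda> (indicator (U' - B m))"
          using Bm A by (intro Lam_add ind_int) (auto simp: U'_def)
        finally show ?thesis using part by simp
      qed
      show "\<forall>\<^sub>F n in sequentially. \<Lambda> (indicator U') - C * (measure M U' - measure M (B n)) \<le> (\<Sum>i<n. a i)"
      proof (intro always_eventually allI)
        fix m
        have "\<Lambda> (indicator (U' - B m)) \<le> C * measure M (U' - B m)"
          using Bm A by (intro Lam_ind_bd) (auto simp: U'_def)
        also have "measure M (U' - B m) = measure M U' - measure M (B m)"
          using Bm A \<open>B m \<subseteq> U'\<close> by (intro measure_Diff) (auto simp: U'_def)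
        finally show "\<Lambda> (indicator U') - C * (measure M U' - measure M (B m)) \<le> (\<Sum>i<m. a i)"
          using diff by simp
      qed
      show "\<forall>\<^sub>F n in sequentially. (\<Sum>i<n. a i) \<le> \<Lambda> (indicator U')"
      proof (intro always_eventually allI)
        fix m show "(\<Sum>i<m. a i) \<le> \<Lambda> (indicator U')"
          using diff Lam_ind_pos[of "U' - B m"] Bm A by (auto simp: U'_def)
      qed
      have "(\<lambda>m. \<Lambda> (indicator U') - C * (measure M U' - measure M (B m))) \<longlonglongrightarrow>
          \<Lambda> (indicator U') - C * (measure M U' - measure M U')"
        by (intro tendsto_intros BU)
      then show "(\<lambda>m. \<Lambda> (indicator U') - C * (measure M U' - measure M (B m))) \<longlonglongrightarrow> \<Lambda> (indicator U')"
        by simp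
    qed (simp)
    have "(\<Sum>i. \<mu>' (A i)) = ennreal (\<Sum>i. a i)"
      unfolding \<mu>'_def a_def[symmetric]
    proof (rule suminf_ennreal2)
      show "0 \<le> a i" for i unfolding a_def using A by (intro Lam_ind_pos) auto
      show "summable a" using sums by (simp add: sums_iff)
    qed
    also have "\<dots> = \<mu>' U'" unfolding \<mu>'_def using sums by (simp add: sums_iff)
    finally show "(\<Sum>i. \<mu>' (A i)) = \<mu>' (\<Union> (range A))" unfolding U'_def .
  qed
  define \<nu> where "\<nu> = measure_of (space M) (sets M) \<mu>'"
  have sets_nu[simp]: "sets \<nu> = sets M" unfolding \<nu>_def by simp
  have space_nu[simp]: "space \<nu> = space M" unfolding \<nu>_def by simp
  have em_nu: "emeasure \<nu> A = ennreal (\<Lambda> (indicator A))" if "A \<in> sets M" for A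
    unfolding \<nu>_def using emeasure_measure_of_sigma[OF sets.sigma_algebra_axioms pos ca that]
    by (simp add: \<mu>'_def)
  have meas_nu: "measure \<nu> A = \<Lambda> (indicator A)" if "A \<in> sets M" for A
    using em_nu[OF that] Lam_ind_pos[OF that] by (simp add: measure_def)
  have fin_nu: "finite_measure \<nu>"
    by (rule finite_measureI) (simp add: em_nu)
  then interpret N: finite_measure \<nu> .
  have ac: "absolutely_continuous M \<nu>"
    unfolding absolutely_continuous_def
  proof
    fix A assume "A \<in> null_sets M"
    then have A: "A \<in> sets M" "measure M A = 0" by (auto simp: null_sets_def measure_def)
    have "\<Lambda> (indicator A) = 0" using Lam_ind_bd[OF A(1)] Lam_ind_pos[OF A(1)] A(2) by simp
    then show "A \<in> null_sets \<nu>" using A em_nu by (simp add: null_sets_def)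
  qed
  define \<rho> where "\<rho> x = enn2real (RN_deriv M \<nu> x)" for x
  have sfN: "sigma_finite_measure \<nu>" by unfold_locales
  have rho_int: "integrable M \<rho>"
    using RN_deriv_integrable[OF sfN ac sets_nu, of "\<lambda>x. 1"] unfolding \<rho>_def by simp
  have rho_m[measurable]: "\<rho> \<in> borel_measurable M" using rho_int by auto
  have Lam_ind: "\<Lambda> (indicator A) = set_lebesgue_integral M A \<rho>" if A: "A \<in> sets M" for A
  proof -
    have "\<Lambda> (indicator A) = (\<integral>x. indicator A x \<partial>\<nu>)" using A by (simp add: meas_nu)
    also have "\<dots> = (\<integral>x. \<rho> x * indicator A x \<partial>M)"
      unfolding \<rho>_def using A by (intro RN_deriv_integral[OF sfN ac sets_nu]) auto
    finally show ?thesis unfolding set_lebesgue_integral_def by (simp add: mult.commute)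
  qed
  have rho_const: "AE x in M. \<rho> x = (\<integral>x. \<rho> x \<partial>M)"
  proof (rule erg_const[OF P aut erg rho_int])
    fix A assume A: "A \<in> sets M"
    have A': "T -` A \<inter> space M \<in> sets M" using A by measurable
    show "set_lebesgue_integral M (T -` A \<inter> space M) \<rho> = set_lebesgue_integral M A \<rho>"
      using Lam_inv[OF A] Lam_ind[OF A] Lam_ind[OF A'] by simp
  qed
  have rho_beta: "(\<integral>x. \<rho> x \<partial>M) = \<beta>"
  proof -
    have "\<Lambda> (indicator (space M)) = \<Lambda> (\<lambda>x. 1)" by (rule Lam_cong) simp
    then have "\<beta> = set_lebesgue_integral M (space M) \<rho>" using Lam_ind[of "space M"] Lam1 by simp
    also have "\<dots> = (\<integral>x. \<rho> x \<partial>M)" unfolding set_lebesgue_integral_def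
      by (rule Bochner_Integration.integral_cong) auto
    finally show ?thesis by simp
  qed
  have Lam_indA: "\<Lambda> (indicator A) = \<beta> * measure M A" if A: "A \<in> sets M" for A
  proof -
    have "\<Lambda> (indicator A) = (\<integral>x. indicator A x * \<beta> \<partial>M)"
      unfolding Lam_ind[OF A] set_lebesgue_integral_def
      using rho_const A by (intro integral_cong_AE) (auto simp: rho_beta)
    also have "\<dots> = \<beta> * measure M A" using A by simp
    finally show ?thesis .
  qed
  have main: "\<Lambda> g = \<beta> * (\<integral>x. g x \<partial>M)" if g: "integrable M g" for g
    using g
  proof (induct rule: integrable_induct)
    case (base A c)
    have "\<Lambda> (\<lambda>x. indicator A x *\<^sub>R c) = \<Lambda> (\<lambda>x. c * indicator A x)" by (simp add: mult.commute)
    also have "\<dots> = c * \<Lambda> (indicator A)" using base by (intro Lam_sc) (auto simp: less_top)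
    also have "\<dots> = \<beta> * (\<integral>x. indicator A x *\<^sub>R c \<partial>M)" using base Lam_indA by simp
    finally show ?case .
  next
    case (add f g)
    then show ?case by (simp add: Lam_add distrib_left)
  next
    case (lim f s)
    have s_int: "\<And>i. integrable M (s i)" by fact
    have fm: "f \<in> borel_measurable M" using lim(5) by auto
    have sm: "s i \<in> borel_measurable M" for i using s_int[of i] by auto
    have L1c: "(\<lambda>i. \<integral>x. \<bar>s i x - f x\<bar> \<partial>M) \<longlonglongrightarrow> (\<integral>x. 0 \<partial>M)"
    proof (rule integral_dominated_convergence[where w="\<lambda>x. 3 * \<bar>f x\<bar>"])
      show "AE x in M. (\<lambda>i. \<bar>s i x - f x\<bar>) \<longlonglongrightarrow> 0"
        by (intro AE_I2 tendsto_rabs_zero LIM_zero lim(3))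
      show "AE x in M. norm \<bar>s i x - f x\<bar> \<le> 3 * \<bar>f x\<bar>" for i
      proof (intro AE_I2)
        fix x assume x: "x \<in> space M"
        have "\<bar>s i x\<bar> \<le> 2 * \<bar>f x\<bar>" using lim(4)[OF x, of i] by simp
        then show "norm \<bar>s i x - f x\<bar> \<le> 3 * \<bar>f x\<bar>" by simp
      qed
      show "(\<lambda>x. 0) \<in> borel_measurable M" by simp
      show "(\<lambda>x. \<bar>s i x - f x\<bar>) \<in> borel_measurable M" for i using fm sm[of i] by measurable
      show "integrable M (\<lambda>x. 3 * \<bar>f x\<bar>)" using lim(5) by simp
    qed
    have "(\<lambda>i. \<Lambda> (s i)) \<longlonglongrightarrow> \<Lambda> f"
    proof (rule tendsto_sandwich[of "\<lambda>i. \<Lambda> f - C * (\<integral>x. \<bar>s i x - f x\<bar> \<partial>M)" _ _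
          "\<lambda>i. \<Lambda> f + C * (\<integral>x. \<bar>s i x - f x\<bar> \<partial>M)"])
      have b: "\<bar>\<Lambda> (s i) - \<Lambda> f\<bar> \<le> C * (\<integral>x. \<bar>s i x - f x\<bar> \<partial>M)" for i
        using Lam_bd[of "\<lambda>x. s i x - f x"] Lam_diff[of "s i" f] s_int lim by auto
      show "\<forall>\<^sub>F i in sequentially. \<Lambda> f - C * (\<integral>x. \<bar>s i x - f x\<bar> \<partial>M) \<le> \<Lambda> (s i)"
      proof (intro always_eventually allI)
        fix i show "\<Lambda> f - C * (\<integral>x. \<bar>s i x - f x\<bar> \<partial>M) \<le> \<Lambda> (s i)" using b[of i] by (simp add: abs_le_iff)
      qed
      show "\<forall>\<^sub>F i in sequentially. \<Lambda> (s i) \<le> \<Lambda> f + C * (\<integral>x. \<bar>s i x - f x\<bar> \<partial>M)"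
      proof (intro always_eventually allI)
        fix i show "\<Lambda> (s i) \<le> \<Lambda> f + C * (\<integral>x. \<bar>s i x - f x\<bar> \<partial>M)" using b[of i] by (simp add: abs_le_iff)
      qed
      show "(\<lambda>i. \<Lambda> f - C * (\<integral>x. \<bar>s i x - f x\<bar> \<partial>M)) \<longlonglongrightarrow> \<Lambda> f"
        using L1c by (auto intro!: tendsto_eq_intros)
      show "(\<lambda>i. \<Lambda> f + C * (\<integral>x. \<bar>s i x - f x\<bar> \<partial>M)) \<longlonglongrightarrow> \<Lambda> f"
        using L1c by (auto intro!: tendsto_eq_intros)
    qed
    moreover have "(\<lambda>i. \<Lambda> (s i)) \<longlonglongrightarrow> \<beta> * (\<integral>x. f x \<partial>M)"
    proof -
      have "(\<lambda>i. \<integral>x. s i x \<partial>M) \<longlonglongrightarrow> (\<integral>x. f x \<partial>M)"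
      proof (rule integral_dominated_convergence[where w="\<lambda>x. 2 * norm (f x)"])
        show "AE x in M. (\<lambda>i. s i x) \<longlonglongrightarrow> f x" by (intro AE_I2 lim(3))
        show "AE x in M. norm (s i x) \<le> 2 * norm (f x)" for i by (intro AE_I2 lim(4))
        show "integrable M (\<lambda>x. 2 * norm (f x))" using lim(5) by simp
      qed (use fm sm in auto)
      then show ?thesis using lim(2) by (auto intro!: tendsto_mult)
    qed
    ultimately show ?case using LIMSEQ_unique by blast
  qed
  have "((\<lambda>n. L n k) \<longlongrightarrow> l) U" using LamT[OF k] main[OF k] unfolding l_def by simp
  then have "eventually (\<lambda>n. dist (L n k) l < \<epsilon>) U" by (rule tendstoD[OF _ e(1)])
  with Ubad have "eventually (\<lambda>n. False) U" by eventually_elim simp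
  then show False using Ubot by (simp add: trivial_limit_def)
qed




lemma tendsto_zero_eps:
  fixes x :: "nat \<Rightarrow> real"
  assumes "\<And>\<epsilon>. \<epsilon> > 0 \<Longrightarrow> \<exists>r. r \<longlonglongrightarrow> 0 \<and> (\<forall>n. \<bar>x n\<bar> \<le> \<epsilon> + r n)"
  shows "x \<longlonglongrightarrow> 0"
proof (rule tendstoI)
  fix e :: real assume e: "e > 0"
  then obtain r where r: "r \<longlonglongrightarrow> 0" "\<And>n. \<bar>x n\<bar> \<le> e/2 + r n" using assms[of "e/2"] by auto
  have "eventually (\<lambda>n. dist (r n) 0 < e/2) sequentially" using r(1) e by (intro tendstoD) auto
  then show "eventually (\<lambda>n. dist (x n) 0 < e) sequentially"
  proof eventually_elim
    case (elim n) then show ?case using r(2)[of n] by (simp add: dist_real_def)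
  qed
qed

lemma bs_shift:
  "birkhoff_sum T f n (T x) = birkhoff_sum T f n x + f ((T ^^ n) x) - f x"
proof (induction n)
  case 0 then show ?case by (simp add: birkhoff_sum_def)
next
  case (Suc n)
  have "birkhoff_sum T f (Suc n) (T x) = birkhoff_sum T f n (T x) + f ((T ^^ n) (T x))"
    by (simp add: birkhoff_sum_def)
  also have "(T ^^ n) (T x) = (T ^^ Suc n) x" by (simp add: funpow_Suc_right del: funpow.simps)
  finally show ?case using Suc by (simp add: birkhoff_sum_def)
qed

lemma funpow_meas: assumes "T \<in> measurable M M" shows "(T ^^ n) \<in> measurable M M"
proof (induction n)
  case (Suc n) then show ?case using assms by (simp add: measurable_comp)
qed simp

lemma bs_meas[measurable]:
  assumes "T \<in> measurable M M" "f \<in> borel_measurable M"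
  shows "birkhoff_sum T f n \<in> borel_measurable M"
proof -
  have [measurable]: "(T ^^ i) \<in> measurable M M" for i using assms(1) by (rule funpow_meas)
  show ?thesis unfolding birkhoff_sum_def[abs_def] using assms(2) by measurable
qed

lemma integral_uniform_real:
  fixes g :: "'a \<Rightarrow> real"
  assumes A[measurable]: "A \<in> sets M" and fin: "emeasure M A \<noteq> \<infinity>" and pos: "measure M A > 0"
    and g[measurable]: "g \<in> borel_measurable M"
  shows "(\<integral>x. g x \<partial>uniform_measure M A) = (\<integral>x. indicator A x * g x \<partial>M) / measure M A"
proof -
  have em: "emeasure M A = ennreal (measure M A)" using fin by (simp add: emeasure_eq_ennreal_measure)
  have "uniform_measure M A = density M (\<lambda>x. ennreal (indicator A x / measure M A))"
    unfolding uniform_measure_def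
  proof (rule density_cong)
    show "AE x in M. indicator A x / emeasure M A = ennreal (indicator A x / measure M A)"
      using pos by (intro AE_I2) (auto simp: em split: split_indicator, metis divide_ennreal ennreal_1 zero_le_one)
  qed auto
  then have "(\<integral>x. g x \<partial>uniform_measure M A) = (\<integral>x. (indicator A x / measure M A) *\<^sub>R g x \<partial>M)"
    by (simp add: integral_density)
  also have "\<dots> = (\<integral>x. inverse (measure M A) * (indicator A x * g x) \<partial>M)"
    by (simp add: divide_inverse mult_ac)
  also have "\<dots> = inverse (measure M A) * (\<integral>x. indicator A x * g x \<partial>M)"
    by (rule integral_mult_right_zero)
  finally show ?thesis by (simp add: divide_inverse mult.commute)
qed

lemma rig_fun:
  fixes f :: "'a \<Rightarrow> real"
  assumes P: "prob_space M" and Tm[measurable]: "T \<in> measurable M M"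
    and rig: "rigidity_along M T q W" and W[measurable]: "\<And>n. W n \<in> sets M"
    and f[measurable]: "f \<in> borel_measurable M" and d: "\<delta> > 0"
  shows "(\<lambda>n. measure M (W n \<inter> {x \<in> space M. \<delta> \<le> \<bar>f ((T ^^ q n) x) - f x\<bar>})) \<longlonglongrightarrow> 0"
proof (rule tendsto_zero_eps)
  interpret prob_space M by fact
  have Tn[measurable]: "(T ^^ i) \<in> measurable M M" for i by (rule funpow_meas[OF Tm])
  fix \<epsilon> :: real assume e: "\<epsilon> > 0"
  define D where "D N = {x \<in> space M. real N < \<bar>f x\<bar>}" for N :: nat
  have Dm[measurable]: "D N \<in> sets M" for N unfolding D_def by measurable
  have "(\<lambda>N. measure M (D N)) \<longlonglongrightarrow> measure M (\<Inter>N. D N)"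
  proof (rule Lim_measure_decseq)
    show "range D \<subseteq> sets M" by auto
    show "decseq D" unfolding decseq_def D_def by auto
  qed (simp add: emeasure_eq_measure)
  moreover have "(\<Inter>N. D N) = {}"
  proof -
    have "x \<notin> D (nat \<lceil>\<bar>f x\<bar>\<rceil>)" for x unfolding D_def by (simp add: not_less)
    then show ?thesis by auto
  qed
  ultimately have "(\<lambda>N. measure M (D N)) \<longlonglongrightarrow> 0" by simp
  then obtain N where N: "measure M (D N) < \<epsilon>"
    using e by (meson LIMSEQ_le_const not_le order.refl)
  define h where "h = \<delta> / 2"
  have h: "h > 0" "h < \<delta>" using d by (auto simp: h_def)
  define K :: int where "K = \<lceil>real N / h\<rceil> + 1"
  define J where "J = {-K..K}"
  define A where "A j = {x \<in> space M. real_of_int j * h \<le> f x \<and> f x < (real_of_int j + 1) * h}" for j :: int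
  have Am[measurable]: "A j \<in> sets M" for j unfolding A_def by measurable
  define r where "r n = (\<Sum>j\<in>J. measure M (symdiff ((T ^^ q n) -` A j \<inter> space M) (A j) \<inter> W n))" for n
  have r: "r \<longlonglongrightarrow> 0"
    unfolding r_def using rig Am by (intro tendsto_null_sum) (auto simp: rigidity_along_def)
  have sub: "W n \<inter> {x \<in> space M. \<delta> \<le> \<bar>f ((T ^^ q n) x) - f x\<bar>} \<subseteq>
      (\<Union>j\<in>J. symdiff ((T ^^ q n) -` A j \<inter> space M) (A j) \<inter> W n) \<union> D N" for n
  proof
    fix x assume x: "x \<in> W n \<inter> {x \<in> space M. \<delta> \<le> \<bar>f ((T ^^ q n) x) - f x\<bar>}"
    show "x \<in> (\<Union>j\<in>J. symdiff ((T ^^ q n) -` A j \<inter> space M) (A j) \<inter> W n) \<union> D N"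
    proof (cases "x \<in> D N")
      case False
      then have fx: "\<bar>f x\<bar> \<le> real N" using x unfolding D_def by auto
      define j where "j = \<lfloor>f x / h\<rfloor>"
      have j1: "real_of_int j * h \<le> f x" using h unfolding j_def
        by (metis floor_divide_lower)
      have j2: "f x < (real_of_int j + 1) * h" using h unfolding j_def
        by (metis floor_divide_upper)
      have xA: "x \<in> A j" using x j1 j2 unfolding A_def by auto
      have "j \<in> J"
      proof -
        have "f x / h \<le> real N / h" using fx h by (simp add: divide_right_mono)
        then have "real_of_int j \<le> real N / h" using j1 h unfolding j_def by linarith
        then have u: "j \<le> K" unfolding K_def by linarith
        have "- real N / h \<le> f x / h" using fx h by (intro divide_right_mono) auto
        then have "- (real N / h) - 1 < real_of_int j" unfolding j_def by linarith
        then have "- K \<le> j" unfolding K_def by linarith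
        with u show ?thesis unfolding J_def by simp
      qed
      moreover have "(T ^^ q n) x \<notin> A j"
      proof
        assume "(T ^^ q n) x \<in> A j"
        then have "\<bar>f ((T ^^ q n) x) - f x\<bar> < h" using j1 j2 unfolding A_def by (auto simp: algebra_simps)
        then show False using x h by auto
      qed
      ultimately show ?thesis using x xA unfolding symdiff_def by auto
    qed simp
  qed
  have "measure M (W n \<inter> {x \<in> space M. \<delta> \<le> \<bar>f ((T ^^ q n) x) - f x\<bar>}) \<le> \<epsilon> + r n" for n
  proof -
    have fJ: "finite J" unfolding J_def by simp
    have sm: "symdiff ((T ^^ q n) -` A j \<inter> space M) (A j) \<inter> W n \<in> sets M" for j
      unfolding symdiff_def by measurable
    have Um: "(\<Union>j\<in>J. symdiff ((T ^^ q n) -` A j \<inter> space M) (A j) \<inter> W n) \<in> sets M"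
      using sm fJ by (intro sets.finite_UN) auto
    have "measure M (W n \<inter> {x \<in> space M. \<delta> \<le> \<bar>f ((T ^^ q n) x) - f x\<bar>}) \<le>
        measure M ((\<Union>j\<in>J. symdiff ((T ^^ q n) -` A j \<inter> space M) (A j) \<inter> W n) \<union> D N)"
    proof (rule finite_measure_mono[OF sub[of n]])
      show "(\<Union>j\<in>J. symdiff ((T ^^ q n) -` A j \<inter> space M) (A j) \<inter> W n) \<union> D N \<in> sets M"
        by (intro sets.Un Dm Um)
    qed
    also have "\<dots> \<le> measure M (\<Union>j\<in>J. symdiff ((T ^^ q n) -` A j \<inter> space M) (A j) \<inter> W n) + measure M (D N)"
      by (intro measure_Un_le Um Dm)
    also have "measure M (\<Union>j\<in>J. symdiff ((T ^^ q n) -` A j \<inter> space M) (A j) \<inter> W n) \<le> r n"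
      unfolding r_def using sm fJ by (intro finite_measure_subadditive_finite) auto
    finally show ?thesis using N by simp
  qed
  then show "\<exists>r. r \<longlonglongrightarrow> 0 \<and> (\<forall>n. \<bar>measure M (W n \<inter> {x \<in> space M. \<delta> \<le> \<bar>f ((T ^^ q n) x) - f x\<bar>})\<bar> \<le> \<epsilon> + r n)"
    using r by auto
qed




lemma core_pos:
  fixes F :: "nat \<Rightarrow> 'a \<Rightarrow> real \<times> real" and \<psi> :: "real \<times> real \<Rightarrow> real" and f :: "'a \<Rightarrow> real"
    and k :: "'a \<Rightarrow> real" and B :: real and PP :: "(real \<times> real) measure"
  assumes P: "prob_space M" and aut: "mp_automorphism M T" and erg: "ergodic M T"
    and W[measurable]: "\<And>n. W n \<in> sets M"
    and C1: "(\<lambda>n. measure M (W n)) \<longlonglongrightarrow> \<alpha>" and \<alpha>pos: "\<alpha> > 0"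
    and C2: "(\<lambda>n. measure M (symdiff (W n) (T -` W n \<inter> space M))) \<longlonglongrightarrow> 0"
    and f[measurable]: "f \<in> borel_measurable M"
    and C3: "rigidity_along M T q W" and C4: "rigidity_along M T q' W"
    and Fm[measurable]: "\<And>n. F n \<in> borel_measurable M"
    and Fsh: "\<And>n x. x \<in> space M \<Longrightarrow> F n (T x) = F n x + (f ((T ^^ q' n) x) - f x, f ((T ^^ q n) x) - f x)"
    and C7: "weak_conv_measures (\<lambda>n. distr (cond_measure M (W n)) borel (F n)) PP"
    and bd: "\<And>z. \<bar>\<psi> z\<bar> \<le> B" and uc: "uniformly_continuous_on UNIV \<psi>" and nn: "\<And>z. 0 \<le> \<psi> z"
    and k: "integrable M k"
  shows "(\<lambda>n. \<integral>x. indicator (W n) x * \<psi> (F n x) * k x \<partial>M) \<longlonglongrightarrow> \<alpha> * (\<integral>z. \<psi> z \<partial>PP) * (\<integral>x. k x \<partial>M)"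
proof -
  interpret prob_space M by fact
  have Tm[measurable]: "T \<in> measurable M M" using aut by (simp add: mp_automorphism_def)
  have Tn[measurable]: "(T ^^ i) \<in> measurable M M" for i by (rule funpow_meas[OF Tm])
  have cont: "continuous_on UNIV \<psi>" by (rule uniformly_continuous_imp_continuous[OF uc])
  have psim[measurable]: "\<psi> \<in> borel_measurable borel" by (rule borel_measurable_continuous_onI[OF cont])
  have B0: "0 \<le> B" using bd[of 0] by simp
  define L where "L n g = (\<integral>x. indicator (W n) x * \<psi> (F n x) * g x \<partial>M)" for n g
  have Lint: "integrable M (\<lambda>x. indicator (W n) x * \<psi> (F n x) * g x)" if g: "integrable M g" for n g
  proof (rule Bochner_Integration.integrable_bound[where f="\<lambda>x. B * g x"])
    show "integrable M (\<lambda>x. B * g x)" using g by simp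
    show "(\<lambda>x. indicator (W n) x * \<psi> (F n x) * g x) \<in> borel_measurable M" using g by measurable
    show "AE x in M. norm (indicator (W n) x * \<psi> (F n x) * g x) \<le> norm (B * g x)"
    proof (intro AE_I2)
      fix x
      have "\<bar>indicator (W n) x * \<psi> (F n x)\<bar> \<le> B" using bd[of "F n x"] B0 by (auto simp: indicator_def)
      then show "norm (indicator (W n) x * \<psi> (F n x) * g x) \<le> norm (B * g x)"
        using B0 by (simp add: abs_mult mult_right_mono)
    qed
  qed
  have main: "(\<lambda>n. L n k) \<longlonglongrightarrow> (\<alpha> * (\<integral>z. \<psi> z \<partial>PP)) * (\<integral>x. k x \<partial>M)"
  proof (rule abstract_ergodic_functional[OF P aut erg, where C=B])
    show "\<bar>L n g\<bar> \<le> B * (\<integral>x. \<bar>g x\<bar> \<partial>M)" if g: "integrable M g" for n g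
    proof -
      have "\<bar>L n g\<bar> \<le> (\<integral>x. \<bar>indicator (W n) x * \<psi> (F n x) * g x\<bar> \<partial>M)"
        unfolding L_def using integral_norm_bound[of M "\<lambda>x. indicator (W n) x * \<psi> (F n x) * g x"] by simp
      also have "\<dots> \<le> (\<integral>x. B * \<bar>g x\<bar> \<partial>M)"
      proof (rule integral_mono)
        show "integrable M (\<lambda>x. \<bar>indicator (W n) x * \<psi> (F n x) * g x\<bar>)" using Lint[OF g] by simp
        show "integrable M (\<lambda>x. B * \<bar>g x\<bar>)" using g by simp
        fix x
        have "\<bar>indicator (W n) x * \<psi> (F n x)\<bar> \<le> B" using bd[of "F n x"] B0 by (auto simp: indicator_def)
        then show "\<bar>indicator (W n) x * \<psi> (F n x) * g x\<bar> \<le> B * \<bar>g x\<bar>"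
          by (simp add: abs_mult mult_right_mono)
      qed
      also have "\<dots> = B * (\<integral>x. \<bar>g x\<bar> \<partial>M)" by simp
      finally show ?thesis .
    qed
    show "L n (\<lambda>x. k1 x + k2 x) = L n k1 + L n k2" if "integrable M k1" "integrable M k2" for n k1 k2
    proof -
      have "L n (\<lambda>x. k1 x + k2 x) = (\<integral>x. indicator (W n) x * \<psi> (F n x) * k1 x + indicator (W n) x * \<psi> (F n x) * k2 x \<partial>M)"
        unfolding L_def by (simp add: distrib_left)
      also have "\<dots> = L n k1 + L n k2" unfolding L_def
        by (rule Bochner_Integration.integral_add) (use Lint that in auto)
      finally show ?thesis .
    qed
    show "L n (\<lambda>x. c * g x) = c * L n g" if "integrable M g" for n g c
    proof -
      have "L n (\<lambda>x. c * g x) = (\<integral>x. c * (indicator (W n) x * \<psi> (F n x) * g x) \<partial>M)"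
        unfolding L_def by (simp add: mult_ac)
      also have "\<dots> = c * L n g" unfolding L_def by (rule integral_mult_right_zero)
      finally show ?thesis .
    qed
    show "L n k1 = L n k2" if "\<And>x. x \<in> space M \<Longrightarrow> k1 x = k2 x" for n k1 k2
      unfolding L_def by (rule Bochner_Integration.integral_cong) (use that in auto)
    show "0 \<le> L n g" if "integrable M g" "\<And>x. x \<in> space M \<Longrightarrow> 0 \<le> g x" for n g
      unfolding L_def by (rule Bochner_Integration.integral_nonneg) (use that nn in \<open>auto intro!: mult_nonneg_nonneg\<close>)
    show "(\<lambda>n. L n (\<lambda>x. 1)) \<longlonglongrightarrow> \<alpha> * (\<integral>z. \<psi> z \<partial>PP)"
    proof -
      have bdd: "bounded (range \<psi>)" by (rule boundedI[where B=B]) (use bd in auto)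
      have conv: "(\<lambda>n. \<integral>z. \<psi> z \<partial>distr (cond_measure M (W n)) borel (F n)) \<longlonglongrightarrow> (\<integral>z. \<psi> z \<partial>PP)"
        using C7 cont bdd unfolding weak_conv_measures_def by blast
      have evpos: "eventually (\<lambda>n. measure M (W n) > 0) sequentially"
        by (rule order_tendstoD(1)[OF C1 \<alpha>pos])
      have "eventually (\<lambda>n. measure M (W n) * (\<integral>z. \<psi> z \<partial>distr (cond_measure M (W n)) borel (F n)) = L n (\<lambda>x. 1)) sequentially"
        using evpos
      proof eventually_elim
        case (elim n)
        have "(\<integral>z. \<psi> z \<partial>distr (cond_measure M (W n)) borel (F n)) = (\<integral>x. \<psi> (F n x) \<partial>uniform_measure M (W n))"
          unfolding cond_measure_def by (rule integral_distr) measurable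
        also have "\<dots> = (\<integral>x. indicator (W n) x * \<psi> (F n x) \<partial>M) / measure M (W n)"
          by (rule integral_uniform_real) (use elim in \<open>auto simp: emeasure_eq_measure\<close>)
        finally show ?case using elim unfolding L_def by simp
      qed
      moreover have "(\<lambda>n. measure M (W n) * (\<integral>z. \<psi> z \<partial>distr (cond_measure M (W n)) borel (F n))) \<longlonglongrightarrow> \<alpha> * (\<integral>z. \<psi> z \<partial>PP)"
        by (rule tendsto_mult[OF C1 conv])
      ultimately show ?thesis by (rule Lim_transform_eventually[rotated])
    qed
    show "(\<lambda>n. L n (indicator (T -` A \<inter> space M)) - L n (indicator A)) \<longlonglongrightarrow> 0" if A[measurable]: "A \<in> sets M" for A
    proof -
      define G where "G n x = indicator (W n) x * \<psi> (F n x)" for n x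
      have Gm[measurable]: "G n \<in> borel_measurable M" for n unfolding G_def by measurable
      have Gb: "\<bar>G n x\<bar> \<le> B" for n x using bd[of "F n x"] B0 by (auto simp: G_def indicator_def)
      have bint: "integrable M h" if "h \<in> borel_measurable M" "\<And>x. \<bar>h x\<bar> \<le> c" for h :: "'a \<Rightarrow> real" and c :: real
        using that by (intro integrable_const_bound[where B=c]) auto
      define D where "D n = L n (indicator (T -` A \<inter> space M)) - L n (indicator A)" for n
      have Deq: "D n = (\<integral>x. (G n x - G n (T x)) * indicator A (T x) \<partial>M)" for n
      proof -
        have e1: "L n (indicator (T -` A \<inter> space M)) = (\<integral>x. G n x * indicator A (T x) \<partial>M)"
          unfolding L_def G_def
          by (rule Bochner_Integration.integral_cong) (auto simp: indicator_def measurable_space[OF Tm])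
        have e2: "L n (indicator A) = (\<integral>x. G n (T x) * indicator A (T x) \<partial>M)"
        proof -
          have "L n (indicator A) = (\<integral>y. G n y * indicator A y \<partial>M)" unfolding L_def G_def by simp
          also have "\<dots> = (\<integral>y. G n y * indicator A y \<partial>distr M M T)" by (simp add: aut_distr[OF aut])
          also have "\<dots> = (\<integral>x. G n (T x) * indicator A (T x) \<partial>M)" by (rule integral_distr) measurable
          finally show ?thesis .
        qed
        have i1: "integrable M (\<lambda>x. G n x * indicator A (T x))"
        proof (rule bint[of _ B])
          show "\<bar>G n x * indicator A (T x)\<bar> \<le> B" for x using Gb[of n x] B0 by (simp add: indicator_def)
        qed measurable
        have i2: "integrable M (\<lambda>x. G n (T x) * indicator A (T x))"
        proof (rule bint[of _ B])
          show "\<bar>G n (T x) * indicator A (T x)\<bar> \<le> B" for x using Gb[of n "T x"] B0 by (simp add: indicator_def)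
        qed measurable
        have "D n = (\<integral>x. G n x * indicator A (T x) \<partial>M) - (\<integral>x. G n (T x) * indicator A (T x) \<partial>M)"
          unfolding D_def e1 e2 ..
        also have "\<dots> = (\<integral>x. G n x * indicator A (T x) - G n (T x) * indicator A (T x) \<partial>M)"
          by (rule Bochner_Integration.integral_diff[OF i1 i2, symmetric])
        also have "\<dots> = (\<integral>x. (G n x - G n (T x)) * indicator A (T x) \<partial>M)"
          by (simp add: left_diff_distrib)
        finally show ?thesis .
      qed
      have "D \<longlonglongrightarrow> 0"
      proof (rule tendsto_zero_eps)
        fix \<epsilon> :: real assume e: "\<epsilon> > 0"
        obtain \<delta> where \<delta>: "\<delta> > 0" and d\<psi>: "\<And>a b. dist a b < \<delta> \<Longrightarrow> dist (\<psi> a) (\<psi> b) < \<epsilon>"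
          using uc e unfolding uniformly_continuous_on_def by (metis UNIV_I)
        define E1 where "E1 n = W n \<inter> {x \<in> space M. \<delta>/2 \<le> \<bar>f ((T ^^ q' n) x) - f x\<bar>}" for n
        define E2 where "E2 n = W n \<inter> {x \<in> space M. \<delta>/2 \<le> \<bar>f ((T ^^ q n) x) - f x\<bar>}" for n
        define S where "S n = symdiff (W n) (T -` W n \<inter> space M)" for n
        have E1m[measurable]: "E1 n \<in> sets M" for n unfolding E1_def by measurable
        have E2m[measurable]: "E2 n \<in> sets M" for n unfolding E2_def by measurable
        have Sm[measurable]: "S n \<in> sets M" for n unfolding S_def symdiff_def by measurable
        have m1: "(\<lambda>n. measure M (E1 n)) \<longlonglongrightarrow> 0" unfolding E1_def
          by (rule rig_fun[OF P Tm C4 W f]) (use \<delta> in simp)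
        have m2: "(\<lambda>n. measure M (E2 n)) \<longlonglongrightarrow> 0" unfolding E2_def
          by (rule rig_fun[OF P Tm C3 W f]) (use \<delta> in simp)
        define r where "r n = B * measure M (S n) + 2 * B * (measure M (E1 n) + measure M (E2 n))" for n
        have "r \<longlonglongrightarrow> B * 0 + 2 * B * (0 + 0)" unfolding r_def S_def
          by (intro tendsto_intros C2 m1 m2)
        then have r0: "r \<longlonglongrightarrow> 0" by simp
        have pw: "\<bar>(G n x - G n (T x)) * indicator A (T x)\<bar> \<le>
            B * indicator (S n) x + (\<epsilon> + 2 * B * (indicator (E1 n) x + indicator (E2 n) x))"
          if x: "x \<in> space M" for n x
        proof -
          have Tx: "T x \<in> space M" using x measurable_space[OF Tm] by blast
          have nn1: "0 \<le> 2 * B * (indicator (E1 n) x + indicator (E2 n) x)" using B0 by simp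
          have nnS: "0 \<le> B * indicator (S n) x" using B0 by simp
          have "\<bar>(G n x - G n (T x)) * indicator A (T x)\<bar> \<le> \<bar>G n x - G n (T x)\<bar>"
            by (simp add: indicator_def)
          also have "\<bar>G n x - G n (T x)\<bar> \<le> B * indicator (S n) x + (\<epsilon> + 2 * B * (indicator (E1 n) x + indicator (E2 n) x))"
          proof (cases "x \<in> W n \<longleftrightarrow> T x \<in> W n")
            case False
            then have "x \<in> S n" using x Tx unfolding S_def symdiff_def by auto
            then have "B * indicator (S n) x = B" by simp
            moreover have "\<bar>G n x - G n (T x)\<bar> \<le> B"
              using False Gb[of n x] Gb[of n "T x"] by (auto simp: G_def indicator_def)
            ultimately show ?thesis using nn1 e by linarith
          next
            case True
            show ?thesis
            proof (cases "x \<in> W n")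
              case False
              then have "G n x - G n (T x) = 0" using True by (simp add: G_def)
              then show ?thesis using nn1 nnS e by linarith
            next
              case xW: True
              with True have TxW: "T x \<in> W n" by simp
              have Gd: "G n x - G n (T x) = \<psi> (F n x) - \<psi> (F n (T x))" using xW TxW by (simp add: G_def)
              show ?thesis
              proof (cases "x \<in> E1 n \<or> x \<in> E2 n")
                case True
                then have "2 * B \<le> 2 * B * (indicator (E1 n) x + indicator (E2 n) x)"
                  using B0 by (auto simp: indicator_def)
                moreover have "\<bar>G n x - G n (T x)\<bar> \<le> 2 * B"
                  unfolding Gd using bd[of "F n x"] bd[of "F n (T x)"] by simp
                ultimately show ?thesis using nnS e by linarith
              next
                case False
                then have d1: "\<bar>f ((T ^^ q' n) x) - f x\<bar> < \<delta>/2" and d2: "\<bar>f ((T ^^ q n) x) - f x\<bar> < \<delta>/2"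
                  using xW x unfolding E1_def E2_def by auto
                have "dist (F n (T x)) (F n x) = norm (f ((T ^^ q' n) x) - f x, f ((T ^^ q n) x) - f x)"
                  using Fsh[OF x, of n] by (simp add: dist_norm)
                also have "\<dots> \<le> norm (f ((T ^^ q' n) x) - f x) + norm (f ((T ^^ q n) x) - f x)"
                  by (rule norm_Pair_le)
                also have "\<dots> < \<delta>" using d1 d2 by simp
                finally have "dist (\<psi> (F n (T x))) (\<psi> (F n x)) < \<epsilon>" by (rule d\<psi>)
                then have "\<bar>G n x - G n (T x)\<bar> < \<epsilon>" unfolding Gd by (simp add: dist_real_def abs_minus_commute)
                then show ?thesis using nn1 nnS by linarith
              qed
            qed
          qed
          finally show ?thesis .
        qed
        have "\<bar>D n\<bar> \<le> \<epsilon> + r n" for n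
        proof -
          have ii: "integrable M (indicator X :: 'a \<Rightarrow> real)" if "X \<in> sets M" for X
            by (rule integrable_real_indicator) (use that in \<open>simp_all add: emeasure_eq_measure\<close>)
          have iS: "integrable M (\<lambda>x. B * indicator (S n) x)" using ii[OF Sm] by simp
          have i12: "integrable M (\<lambda>x. indicator (E1 n) x + indicator (E2 n) x :: real)"
            using ii[OF E1m] ii[OF E2m] by simp
          have i12': "integrable M (\<lambda>x. \<epsilon> + 2 * B * (indicator (E1 n) x + indicator (E2 n) x))"
            using i12 by simp
          have iR: "integrable M (\<lambda>x. B * indicator (S n) x + (\<epsilon> + 2 * B * (indicator (E1 n) x + indicator (E2 n) x)))"
            using iS i12' by simp
          have iD: "integrable M (\<lambda>x. (G n x - G n (T x)) * indicator A (T x))"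
          proof (rule bint[of _ "2*B"])
            show "\<bar>(G n x - G n (T x)) * indicator A (T x)\<bar> \<le> 2 * B" for x
              using Gb[of n x] Gb[of n "T x"] B0 by (simp add: indicator_def abs_le_iff)
          qed measurable
          have "\<bar>D n\<bar> \<le> (\<integral>x. \<bar>(G n x - G n (T x)) * indicator A (T x)\<bar> \<partial>M)"
            unfolding Deq using integral_norm_bound[of M "\<lambda>x. (G n x - G n (T x)) * indicator A (T x)"] by simp
          also have "\<dots> \<le> (\<integral>x. B * indicator (S n) x + (\<epsilon> + 2 * B * (indicator (E1 n) x + indicator (E2 n) x)) \<partial>M)"
            by (rule integral_mono) (use iD iR pw in auto)
          also have "\<dots> = (\<integral>x. B * indicator (S n) x \<partial>M) + (\<integral>x. \<epsilon> + 2 * B * (indicator (E1 n) x + indicator (E2 n) x) \<partial>M)"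
            by (rule Bochner_Integration.integral_add[OF iS i12'])
          also have "\<dots> = \<epsilon> + r n"
          proof -
            have a: "(\<integral>x. \<epsilon> + 2 * B * (indicator (E1 n) x + indicator (E2 n) x) \<partial>M)
              = \<epsilon> + (\<integral>x. 2 * B * (indicator (E1 n) x + indicator (E2 n) x) \<partial>M)"
              using Bochner_Integration.integral_add[of M "\<lambda>x. \<epsilon>" "\<lambda>x. 2 * B * (indicator (E1 n) x + indicator (E2 n) x)"] i12
              by (simp add: prob_space)
            have b: "(\<integral>x. 2 * B * (indicator (E1 n) x + indicator (E2 n) x) \<partial>M) = 2 * B * (measure M (E1 n) + measure M (E2 n))"
              using Bochner_Integration.integral_add[OF ii[OF E1m] ii[OF E2m]] by simp
            have c: "(\<integral>x. B * indicator (S n) x \<partial>M) = B * measure M (S n)" by simp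
            show ?thesis unfolding a b c r_def by simp
          qed
          finally show ?thesis .
        qed
        then show "\<exists>r. r \<longlonglongrightarrow> 0 \<and> (\<forall>n. \<bar>D n\<bar> \<le> \<epsilon> + r n)" using r0 by blast
      qed
      then show ?thesis unfolding D_def .
    qed
  qed (rule k)
  then show ?thesis unfolding L_def by (simp add: mult.assoc)
qed

lemma core:
  fixes F :: "nat \<Rightarrow> 'a \<Rightarrow> real \<times> real" and \<psi> :: "real \<times> real \<Rightarrow> real" and f :: "'a \<Rightarrow> real"
    and k :: "'a \<Rightarrow> real" and B :: real and PP :: "(real \<times> real) measure"
  assumes P: "prob_space M" and aut: "mp_automorphism M T" and erg: "ergodic M T"
    and W[measurable]: "\<And>n. W n \<in> sets M"
    and C1: "(\<lambda>n. measure M (W n)) \<longlonglongrightarrow> \<alpha>" and \<alpha>pos: "\<alpha> > 0"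
    and C2: "(\<lambda>n. measure M (symdiff (W n) (T -` W n \<inter> space M))) \<longlonglongrightarrow> 0"
    and f[measurable]: "f \<in> borel_measurable M"
    and C3: "rigidity_along M T q W" and C4: "rigidity_along M T q' W"
    and Fm[measurable]: "\<And>n. F n \<in> borel_measurable M"
    and Fsh: "\<And>n x. x \<in> space M \<Longrightarrow> F n (T x) = F n x + (f ((T ^^ q' n) x) - f x, f ((T ^^ q n) x) - f x)"
    and C7: "weak_conv_measures (\<lambda>n. distr (cond_measure M (W n)) borel (F n)) PP"
    and PP: "prob_space PP" and PPs: "sets PP = sets (borel :: (real \<times> real) measure)"
    and bd: "\<And>z. \<bar>\<psi> z\<bar> \<le> B" and uc: "uniformly_continuous_on UNIV \<psi>"
    and k: "integrable M k"
  shows "(\<lambda>n. \<integral>x. indicator (W n) x * \<psi> (F n x) * k x \<partial>M) \<longlonglongrightarrow> \<alpha> * (\<integral>z. \<psi> z \<partial>PP) * (\<integral>x. k x \<partial>M)"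
proof -
  interpret prob_space M by fact
  interpret Q: prob_space PP by fact
  have B0: "0 \<le> B" using bd[of 0] by simp
  have cont: "continuous_on UNIV \<psi>" by (rule uniformly_continuous_imp_continuous[OF uc])
  have psim[measurable]: "\<psi> \<in> borel_measurable borel" by (rule borel_measurable_continuous_onI[OF cont])
  have psimP: "\<psi> \<in> borel_measurable PP" using psim measurable_cong_sets[OF PPs refl] by blast
  have uc1: "uniformly_continuous_on UNIV (\<lambda>z. \<psi> z + B)"
    using uc by (intro uniformly_continuous_on_add uniformly_continuous_on_const)
  have uc2: "uniformly_continuous_on UNIV (\<lambda>z::real\<times>real. B)" by (rule uniformly_continuous_on_const)
  have l1: "(\<lambda>n. \<integral>x. indicator (W n) x * (\<psi> (F n x) + B) * k x \<partial>M) \<longlonglongrightarrow> \<alpha> * (\<integral>z. \<psi> z + B \<partial>PP) * (\<integral>x. k x \<partial>M)"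
    by (rule core_pos[OF P aut erg W C1 \<alpha>pos C2 f C3 C4 Fm Fsh C7 _ uc1 _ k, where B="2*B"])
       (use bd B0 in \<open>auto simp: abs_le_iff\<close>; smt (verit) bd abs_le_iff)+
  have l2: "(\<lambda>n. \<integral>x. indicator (W n) x * B * k x \<partial>M) \<longlonglongrightarrow> \<alpha> * (\<integral>z. B \<partial>PP) * (\<integral>x. k x \<partial>M)"
    using core_pos[OF P aut erg W C1 \<alpha>pos C2 f C3 C4 Fm Fsh C7 _ uc2 _ k, where B="B"] B0 by simp
  have iB: "integrable M (\<lambda>x. indicator (W n) x * c * k x)" for n c
  proof -
    have "integrable M (\<lambda>x. c * (k x * indicator (W n) x))"
      using k by (intro integrable_mult_right integrable_real_mult_indicator) auto
    then show ?thesis by (simp add: mult_ac)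
  qed
  have eq: "(\<integral>x. indicator (W n) x * \<psi> (F n x) * k x \<partial>M) =
      (\<integral>x. indicator (W n) x * (\<psi> (F n x) + B) * k x \<partial>M) - (\<integral>x. indicator (W n) x * B * k x \<partial>M)" for n
  proof -
    have i1: "integrable M (\<lambda>x. indicator (W n) x * (\<psi> (F n x) + B) * k x)"
    proof (rule Bochner_Integration.integrable_bound[where f="\<lambda>x. (2*B) * k x"])
      show "integrable M (\<lambda>x. (2*B) * k x)" using k by simp
      show "(\<lambda>x. indicator (W n) x * (\<psi> (F n x) + B) * k x) \<in> borel_measurable M" using k by measurable
      show "AE x in M. norm (indicator (W n) x * (\<psi> (F n x) + B) * k x) \<le> norm ((2*B) * k x)"
      proof (intro AE_I2)
        fix x
        have "\<bar>indicator (W n) x * (\<psi> (F n x) + B)\<bar> \<le> 2*B" using bd[of "F n x"] B0 by (auto simp: indicator_def abs_le_iff)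
        then show "norm (indicator (W n) x * (\<psi> (F n x) + B) * k x) \<le> norm ((2*B) * k x)"
          using B0 by (simp add: abs_mult mult_right_mono)
      qed
    qed
    have "(\<integral>x. indicator (W n) x * (\<psi> (F n x) + B) * k x \<partial>M) - (\<integral>x. indicator (W n) x * B * k x \<partial>M)
        = (\<integral>x. indicator (W n) x * (\<psi> (F n x) + B) * k x - indicator (W n) x * B * k x \<partial>M)"
      by (rule Bochner_Integration.integral_diff[OF i1 iB, symmetric])
    also have "\<dots> = (\<integral>x. indicator (W n) x * \<psi> (F n x) * k x \<partial>M)"
      by (simp add: algebra_simps)
    finally show ?thesis by simp
  qed
  have "(\<integral>z. \<psi> z + B \<partial>PP) = (\<integral>z. \<psi> z \<partial>PP) + B"
  proof -
    have "integrable PP \<psi>" by (rule Q.integrable_const_bound[where B=B]) (use bd psimP in auto)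
    then show ?thesis by (simp add: Q.prob_space)
  qed
  then have lim: "\<alpha> * (\<integral>z. \<psi> z \<partial>PP) * (\<integral>x. k x \<partial>M) =
      \<alpha> * (\<integral>z. \<psi> z + B \<partial>PP) * (\<integral>x. k x \<partial>M) - \<alpha> * (\<integral>z. B \<partial>PP) * (\<integral>x. k x \<partial>M)"
    by (simp add: Q.prob_space algebra_simps)
  show ?thesis unfolding eq lim by (rule tendsto_diff[OF l1 l2])
qed




locale thm_setup =
  fixes M :: "'a measure" and T :: "'a \<Rightarrow> 'a" and f :: "'a \<Rightarrow> real" and W :: "nat \<Rightarrow> 'a set"
    and q q' :: "nat \<Rightarrow> nat" and \<alpha> :: real and F :: "nat \<Rightarrow> 'a \<Rightarrow> real \<times> real"
    and PP :: "(real \<times> real) measure"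
  assumes P: "prob_space M" and aut: "mp_automorphism M T" and erg: "ergodic M T"
    and W[measurable]: "\<And>n. W n \<in> sets M"
    and C1: "(\<lambda>n. measure M (W n)) \<longlonglongrightarrow> \<alpha>" and \<alpha>pos: "\<alpha> > 0"
    and C2: "(\<lambda>n. measure M (symdiff (W n) (T -` W n \<inter> space M))) \<longlonglongrightarrow> 0"
    and f[measurable]: "f \<in> borel_measurable M"
    and C3: "rigidity_along M T q W" and C4: "rigidity_along M T q' W"
    and Fm[measurable]: "\<And>n. F n \<in> borel_measurable M"
    and Fsh: "\<And>n x. x \<in> space M \<Longrightarrow> F n (T x) = F n x + (f ((T ^^ q' n) x) - f x, f ((T ^^ q n) x) - f x)"
    and C7: "weak_conv_measures (\<lambda>n. distr (cond_measure M (W n)) borel (F n)) PP"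
    and PP: "prob_space PP" and PPs: "sets PP = sets (borel :: (real \<times> real) measure)"
begin

lemma uc_shift:
  fixes \<phi> :: "real \<times> real \<Rightarrow> real"
  assumes "uniformly_continuous_on UNIV \<phi>"
  shows "uniformly_continuous_on UNIV (\<lambda>z. \<phi> (z + c))"
  unfolding uniformly_continuous_on_def
proof (intro allI impI)
  fix e :: real assume "e > 0"
  then obtain d where d: "d > 0" "\<And>x x'. dist x' x < d \<Longrightarrow> dist (\<phi> x') (\<phi> x) < e"
    using assms unfolding uniformly_continuous_on_def by (metis UNIV_I)
  show "\<exists>d>0. \<forall>x\<in>UNIV. \<forall>x'\<in>UNIV. dist x' x < d \<longrightarrow> dist (\<phi> (x' + c)) (\<phi> (x + c)) < e"
    using d by (intro exI[of _ d]) (auto simp: dist_norm)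
qed

lemma step_conv:
  fixes \<phi> :: "real \<times> real \<Rightarrow> real" and v :: "'a \<Rightarrow> real \<times> real" and g :: "'a \<Rightarrow> real"
  assumes \<phi>bd: "\<And>z. \<bar>\<phi> z\<bar> \<le> B" and uc: "uniformly_continuous_on UNIV \<phi>"
    and vm[measurable]: "v \<in> borel_measurable M" and vfin: "finite (v ` space M)"
    and gm[measurable]: "g \<in> borel_measurable M" and gb: "AE x in M. \<bar>g x\<bar> \<le> G"
  shows "(\<lambda>n. \<integral>x. indicator (W n) x * \<phi> (F n x + v x) * g x \<partial>M)
          \<longlonglongrightarrow> \<alpha> * (\<integral>x. (\<integral>z. \<phi> (z + v x) \<partial>PP) * g x \<partial>M)"
proof -
  interpret prob_space M by (rule P)
  interpret Q: prob_space PP by (rule PP)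
  have cont: "continuous_on UNIV \<phi>" by (rule uniformly_continuous_imp_continuous[OF uc])
  have phim[measurable]: "\<phi> \<in> borel_measurable borel" by (rule borel_measurable_continuous_onI[OF cont])
  define V where "V = v ` space M"
  define E where "E c = {x \<in> space M. v x = c}" for c
  have Em[measurable]: "E c \<in> sets M" for c unfolding E_def by measurable
  define k where "k c x = g x * indicator (E c) x" for c x
  have km[measurable]: "k c \<in> borel_measurable M" for c unfolding k_def by measurable
  have kint: "integrable M (k c)" for c
  proof (rule integrable_const_bound[where B=G])
    show "AE x in M. norm (k c x) \<le> G" using gb
      by eventually_elim (auto simp: k_def indicator_def)
  qed (rule km)
  have lim_c: "(\<lambda>n. \<integral>x. indicator (W n) x * \<phi> (F n x + c) * k c x \<partial>M)
      \<longlonglongrightarrow> \<alpha> * (\<integral>z. \<phi> (z + c) \<partial>PP) * (\<integral>x. k c x \<partial>M)" for c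
    by (rule core[OF P aut erg W C1 \<alpha>pos C2 f C3 C4 Fm Fsh C7 PP PPs _ uc_shift[OF uc] kint, where B=B])
       (use \<phi>bd in auto)
  have pw: "(\<Sum>c\<in>V. A c * k c x) = A (v x) * g x" if x: "x \<in> space M" for A :: "real \<times> real \<Rightarrow> real" and x
  proof -
    have "(\<Sum>c\<in>V. A c * k c x) = (\<Sum>c\<in>V. if c = v x then A c * g x else 0)"
      by (rule sum.cong) (use x in \<open>auto simp: k_def E_def indicator_def\<close>)
    also have "\<dots> = A (v x) * g x" using x vfin unfolding V_def by (simp add: sum.delta)
    finally show ?thesis .
  qed
  have bdint: "integrable M (\<lambda>x. indicator (W n) x * \<phi> (F n x + c) * k c x)" for n c
  proof (rule integrable_const_bound[where B="B*G"])
    show "AE x in M. norm (indicator (W n) x * \<phi> (F n x + c) * k c x) \<le> B * G"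
      using gb
    proof eventually_elim
      case (elim x)
      have "\<bar>indicator (W n) x * \<phi> (F n x + c)\<bar> \<le> B" using \<phi>bd[of "F n x + c"] \<phi>bd[of 0]
        by (auto simp: indicator_def)
      moreover have "\<bar>k c x\<bar> \<le> G" using elim by (auto simp: k_def indicator_def)
      ultimately show ?case by (simp add: abs_mult mult_mono')
    qed
  qed measurable
  have lhs: "(\<integral>x. indicator (W n) x * \<phi> (F n x + v x) * g x \<partial>M) =
      (\<Sum>c\<in>V. \<integral>x. indicator (W n) x * \<phi> (F n x + c) * k c x \<partial>M)" for n
  proof -
    have "(\<integral>x. indicator (W n) x * \<phi> (F n x + v x) * g x \<partial>M) =
        (\<integral>x. (\<Sum>c\<in>V. indicator (W n) x * \<phi> (F n x + c) * k c x) \<partial>M)"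
    proof (rule Bochner_Integration.integral_cong[OF refl])
      fix x assume x: "x \<in> space M"
      show "indicator (W n) x * \<phi> (F n x + v x) * g x = (\<Sum>c\<in>V. indicator (W n) x * \<phi> (F n x + c) * k c x)"
        using pw[OF x, of "\<lambda>c. indicator (W n) x * \<phi> (F n x + c)"] by simp
    qed
    also have "\<dots> = (\<Sum>c\<in>V. \<integral>x. indicator (W n) x * \<phi> (F n x + c) * k c x \<partial>M)"
      by (rule Bochner_Integration.integral_sum) (rule bdint)
    finally show ?thesis .
  qed
  have rhs: "\<alpha> * (\<integral>x. (\<integral>z. \<phi> (z + v x) \<partial>PP) * g x \<partial>M) =
      (\<Sum>c\<in>V. \<alpha> * (\<integral>z. \<phi> (z + c) \<partial>PP) * (\<integral>x. k c x \<partial>M))"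
  proof -
    have "(\<integral>x. (\<integral>z. \<phi> (z + v x) \<partial>PP) * g x \<partial>M) = (\<integral>x. (\<Sum>c\<in>V. (\<integral>z. \<phi> (z + c) \<partial>PP) * k c x) \<partial>M)"
    proof (rule Bochner_Integration.integral_cong[OF refl])
      fix x assume x: "x \<in> space M"
      show "(\<integral>z. \<phi> (z + v x) \<partial>PP) * g x = (\<Sum>c\<in>V. (\<integral>z. \<phi> (z + c) \<partial>PP) * k c x)"
        using pw[OF x, of "\<lambda>c. \<integral>z. \<phi> (z + c) \<partial>PP"] by simp
    qed
    also have "\<dots> = (\<Sum>c\<in>V. (\<integral>z. \<phi> (z + c) \<partial>PP) * (\<integral>x. k c x \<partial>M))"
      using kint by (subst Bochner_Integration.integral_sum) auto
    finally show ?thesis by (simp add: sum_distrib_left mult.assoc)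
  qed
  show ?thesis unfolding lhs rhs by (intro tendsto_sum lim_c)
qed

end




definition stp :: "nat \<Rightarrow> real \<Rightarrow> real" where
  "stp K y = (if \<bar>y\<bar> \<le> real K then real_of_int \<lfloor>y * real K\<rfloor> / real K else 0)"

lemma stp_meas[measurable]: "stp K \<in> borel_measurable borel"
  unfolding stp_def[abs_def] by measurable

lemma stp_err: assumes "K > 0" "\<bar>y\<bar> \<le> real K" shows "\<bar>y - stp K y\<bar> \<le> 1 / real K"
proof -
  have K: "real K > 0" using assms by simp
  have a: "real_of_int \<lfloor>y * real K\<rfloor> \<le> y * real K" by (rule of_int_floor_le)
  have b: "y * real K < real_of_int \<lfloor>y * real K\<rfloor> + 1" by (rule real_of_int_floor_add_one_gt)
  have "stp K y = real_of_int \<lfloor>y * real K\<rfloor> / real K" using assms by (simp add: stp_def)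
  moreover have "real_of_int \<lfloor>y * real K\<rfloor> / real K \<le> y" using a K by (simp add: divide_le_eq)
  moreover have "y - real_of_int \<lfloor>y * real K\<rfloor> / real K \<le> 1 / real K"
  proof -
    have "y * real K - real_of_int \<lfloor>y * real K\<rfloor> \<le> 1" using b by linarith
    then have "(y * real K - real_of_int \<lfloor>y * real K\<rfloor>) / real K \<le> 1 / real K" using K
      by (simp add: divide_right_mono)
    then show ?thesis using K by (simp add: diff_divide_distrib)
  qed
  ultimately show ?thesis by simp
qed

lemma stp_range: "finite (range (stp K))"
proof -
  have "range (stp K) \<subseteq> (\<lambda>j. real_of_int j / real K) ` {-(int K * int K) - 1 .. int K * int K} \<union> {0}"
  proof
    fix r assume "r \<in> range (stp K)"
    then obtain y where r: "r = stp K y" by auto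
    show "r \<in> (\<lambda>j. real_of_int j / real K) ` {-(int K * int K) - 1 .. int K * int K} \<union> {0}"
    proof (cases "\<bar>y\<bar> \<le> real K")
      case True
      have "\<bar>y * real K\<bar> \<le> real K * real K" using True by (simp add: abs_mult mult_right_mono)
      then have "- (real K * real K) \<le> y * real K" "y * real K \<le> real K * real K" by (auto simp: abs_le_iff)
      then have "- (int K * int K) - 1 \<le> \<lfloor>y * real K\<rfloor>" "\<lfloor>y * real K\<rfloor> \<le> int K * int K"
        by (auto simp: floor_le_iff le_floor_iff)
      then show ?thesis using True r unfolding stp_def by auto
    qed (use r in \<open>auto simp: stp_def\<close>)
  qed
  then show ?thesis by (rule finite_subset) auto
qed

lemma approx_lim:
  fixes a c :: "nat \<Rightarrow> real"
  assumes "\<And>\<epsilon>. \<epsilon> > 0 \<Longrightarrow> \<exists>c d. c \<longlonglongrightarrow> d \<and> (\<forall>n. \<bar>a n - c n\<bar> \<le> \<epsilon>) \<and> \<bar>b - d\<bar> \<le> \<epsilon>"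
  shows "a \<longlonglongrightarrow> b"
proof (rule tendstoI)
  fix e :: real assume e: "e > 0"
  then obtain c d where cd: "c \<longlonglongrightarrow> d" "\<And>n. \<bar>a n - c n\<bar> \<le> e/3" "\<bar>b - d\<bar> \<le> e/3"
    using assms[of "e/3"] by auto
  have "eventually (\<lambda>n. dist (c n) d < e/3) sequentially" using cd(1) e by (intro tendstoD) auto
  then show "eventually (\<lambda>n. dist (a n) b < e) sequentially"
  proof eventually_elim
    case (elim n)
    have "\<bar>a n - b\<bar> \<le> \<bar>a n - c n\<bar> + \<bar>c n - d\<bar> + \<bar>b - d\<bar>" by linarith
    then show ?case using elim cd(2)[of n] cd(3) by (simp add: dist_real_def)
  qed
qed

context thm_setup begin

lemma full_conv:
  fixes \<phi> :: "real \<times> real \<Rightarrow> real" and h h' g :: "'a \<Rightarrow> real"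
  assumes \<phi>bd: "\<And>z. \<bar>\<phi> z\<bar> \<le> B\<phi>" and uc: "uniformly_continuous_on UNIV \<phi>"
    and hm[measurable]: "h \<in> borel_measurable M" and h'm[measurable]: "h' \<in> borel_measurable M"
    and gm[measurable]: "g \<in> borel_measurable M" and gb: "AE x in M. \<bar>g x\<bar> \<le> G"
    and \<alpha>1: "\<alpha> \<le> 1"
  shows "(\<lambda>n. \<integral>x. indicator (W n) x * \<phi> (F n x + (h' x, h x)) * g x \<partial>M)
          \<longlonglongrightarrow> \<alpha> * (\<integral>x. (\<integral>z. \<phi> (z + (h' x, h x)) \<partial>PP) * g x \<partial>M)"
proof (rule approx_lim)
  interpret prob_space M by (rule P)
  interpret Q: prob_space PP by (rule PP)
  note PPs[measurable_cong]
  have cont: "continuous_on UNIV \<phi>" by (rule uniformly_continuous_imp_continuous[OF uc])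
  have phim[measurable]: "\<phi> \<in> borel_measurable borel" by (rule borel_measurable_continuous_onI[OF cont])
  define G0 where "G0 = max G 0"
  have G0: "0 \<le> G0" unfolding G0_def by simp
  have gb0: "AE x in M. \<bar>g x\<bar> \<le> G0" using gb unfolding G0_def by eventually_elim simp
  have B0: "0 \<le> B\<phi>" using \<phi>bd[of 0] by simp
  fix \<epsilon> :: real assume e: "\<epsilon> > 0"
  define \<eta> where "\<eta> = \<epsilon> / (2 * (G0 + 1))"
  have \<eta>: "\<eta> > 0" using e G0 unfolding \<eta>_def by simp
  have G\<eta>: "G0 * \<eta> \<le> \<epsilon> / 2"
  proof -
    have "G0 * \<eta> = (\<epsilon> / 2) * (G0 / (G0 + 1))" unfolding \<eta>_def by (simp add: field_simps)
    also have "\<dots> \<le> (\<epsilon> / 2) * 1" using e G0 by (intro mult_left_mono) auto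
    finally show ?thesis by simp
  qed
  obtain \<delta> where \<delta>: "\<delta> > 0" and d\<phi>: "\<And>a b. dist a b < \<delta> \<Longrightarrow> dist (\<phi> a) (\<phi> b) < \<eta>"
    using uc \<eta> unfolding uniformly_continuous_on_def by (metis UNIV_I)
  define bad where "bad K = {x \<in> space M. real K < \<bar>h x\<bar> \<or> real K < \<bar>h' x\<bar>}" for K :: nat
  have badm[measurable]: "bad K \<in> sets M" for K unfolding bad_def by measurable
  have "(\<lambda>K. measure M (bad K)) \<longlonglongrightarrow> measure M (\<Inter>K. bad K)"
  proof (rule Lim_measure_decseq)
    show "range bad \<subseteq> sets M" by auto
    show "decseq bad" unfolding decseq_def bad_def by auto
  qed (simp add: emeasure_eq_measure)
  moreover have "(\<Inter>K. bad K) = {}"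
  proof -
    have "x \<notin> bad (nat \<lceil>max \<bar>h x\<bar> \<bar>h' x\<bar>\<rceil>)" for x unfolding bad_def
      by (auto simp: not_less) (meson le_of_int_ceiling max.boundedE)+
    then show ?thesis by auto
  qed
  ultimately have mbad: "(\<lambda>K. measure M (bad K)) \<longlonglongrightarrow> 0" by simp
  have ev1: "eventually (\<lambda>K. 2 / real K < \<delta>) sequentially"
    by (rule order_tendstoD(2)[OF lim_const_over_n \<delta>])
  have "(\<lambda>K. G0 * (2 * B\<phi>) * measure M (bad K)) \<longlonglongrightarrow> G0 * (2 * B\<phi>) * 0"
    by (intro tendsto_mult_left mbad)
  then have ev2: "eventually (\<lambda>K. G0 * (2 * B\<phi>) * measure M (bad K) < \<epsilon> / 2) sequentially"
    using e by (intro order_tendstoD(2)) auto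
  have "eventually (\<lambda>K. 2 / real K < \<delta> \<and> G0 * (2 * B\<phi>) * measure M (bad K) < \<epsilon> / 2 \<and> K > 0) sequentially"
    using ev1 ev2 eventually_gt_at_top[of 0] by eventually_elim auto
  then obtain K where K: "2 / real K < \<delta>" "G0 * (2 * B\<phi>) * measure M (bad K) < \<epsilon> / 2" "K > 0"
    by (auto simp: eventually_sequentially)
  define HK where "HK x = (stp K (h' x), stp K (h x))" for x
  have HKm[measurable]: "HK \<in> borel_measurable M" unfolding HK_def by measurable
  have HKfin: "finite (HK ` space M)"
  proof (rule finite_subset)
    show "HK ` space M \<subseteq> range (stp K) \<times> range (stp K)" unfolding HK_def by auto
    show "finite (range (stp K) \<times> range (stp K))" using stp_range by simp
  qed
  have err: "\<bar>\<phi> (z + (h' x, h x)) - \<phi> (z + HK x)\<bar> \<le> \<eta> + 2 * B\<phi> * indicator (bad K) x"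
    if x: "x \<in> space M" for x z
  proof (cases "x \<in> bad K")
    case True
    then show ?thesis using \<phi>bd[of "z + (h' x, h x)"] \<phi>bd[of "z + HK x"] \<eta> by (simp add: abs_le_iff)
  next
    case False
    then have hx: "\<bar>h x\<bar> \<le> real K" "\<bar>h' x\<bar> \<le> real K" using x unfolding bad_def by auto
    have "dist (z + (h' x, h x)) (z + HK x) = norm (h' x - stp K (h' x), h x - stp K (h x))"
      unfolding HK_def by (simp add: dist_norm)
    also have "\<dots> \<le> norm (h' x - stp K (h' x)) + norm (h x - stp K (h x))" by (rule norm_Pair_le)
    also have "\<dots> \<le> 1 / real K + 1 / real K" using stp_err[OF K(3) hx(1)] stp_err[OF K(3) hx(2)] by simp
    also have "\<dots> < \<delta>" using K(1) by simp
    finally have "dist (\<phi> (z + (h' x, h x))) (\<phi> (z + HK x)) < \<eta>" by (rule d\<phi>)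
    then show ?thesis using False by (simp add: dist_real_def)
  qed
  define c where "c n = (\<integral>x. indicator (W n) x * \<phi> (F n x + HK x) * g x \<partial>M)" for n
  define d where "d = \<alpha> * (\<integral>x. (\<integral>z. \<phi> (z + HK x) \<partial>PP) * g x \<partial>M)"
  have cd: "c \<longlonglongrightarrow> d" unfolding c_def d_def
    by (rule step_conv[OF \<phi>bd uc HKm HKfin gm gb])
  have iE: "integrable M (\<lambda>x. G0 * (\<eta> + 2 * B\<phi> * indicator (bad K) x))"
  proof -
    have "integrable M (indicator (bad K) :: 'a \<Rightarrow> real)"
      by (rule integrable_real_indicator) (simp_all add: emeasure_eq_measure)
    then show ?thesis by simp
  qed
  have intE: "(\<integral>x. G0 * (\<eta> + 2 * B\<phi> * indicator (bad K) x) \<partial>M) \<le> \<epsilon>"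
  proof -
    have ii: "integrable M (indicator (bad K) :: 'a \<Rightarrow> real)"
      by (rule integrable_real_indicator) (simp_all add: emeasure_eq_measure)
    have "(\<integral>x. G0 * (\<eta> + 2 * B\<phi> * indicator (bad K) x) \<partial>M) = G0 * \<eta> + G0 * (2 * B\<phi>) * measure M (bad K)"
      using ii by (simp add: distrib_left prob_space mult.assoc)
    then show ?thesis using G\<eta> K(2) by simp
  qed
  have "\<bar>(\<integral>x. indicator (W n) x * \<phi> (F n x + (h' x, h x)) * g x \<partial>M) - c n\<bar> \<le> \<epsilon>" for n
  proof -
    have b1: "integrable M (\<lambda>x. indicator (W n) x * \<phi> (F n x + v x) * g x)" if [measurable]: "v \<in> borel_measurable M" for v
    proof (rule integrable_const_bound[where B="B\<phi> * G0"])
      show "AE x in M. norm (indicator (W n) x * \<phi> (F n x + v x) * g x) \<le> B\<phi> * G0"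
        using gb0
      proof eventually_elim
        case (elim x)
        have "\<bar>indicator (W n) x * \<phi> (F n x + v x)\<bar> \<le> B\<phi>" using \<phi>bd[of "F n x + v x"] B0
          by (auto simp: indicator_def)
        then show ?case using elim by (simp add: abs_mult mult_mono')
      qed
    qed measurable
    have i1: "integrable M (\<lambda>x. indicator (W n) x * \<phi> (F n x + (h' x, h x)) * g x)"
      by (rule b1) measurable
    have i2: "integrable M (\<lambda>x. indicator (W n) x * \<phi> (F n x + HK x) * g x)"
      by (rule b1) measurable
    have "(\<integral>x. indicator (W n) x * \<phi> (F n x + (h' x, h x)) * g x \<partial>M) - c n =
        (\<integral>x. indicator (W n) x * \<phi> (F n x + (h' x, h x)) * g x - indicator (W n) x * \<phi> (F n x + HK x) * g x \<partial>M)"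
      unfolding c_def by (rule Bochner_Integration.integral_diff[OF i1 i2, symmetric])
    also have "\<bar>\<dots>\<bar> \<le> (\<integral>x. \<bar>indicator (W n) x * \<phi> (F n x + (h' x, h x)) * g x - indicator (W n) x * \<phi> (F n x + HK x) * g x\<bar> \<partial>M)"
      using integral_norm_bound[of M "\<lambda>x. indicator (W n) x * \<phi> (F n x + (h' x, h x)) * g x - indicator (W n) x * \<phi> (F n x + HK x) * g x"]
      by simp
    also have "\<dots> \<le> (\<integral>x. G0 * (\<eta> + 2 * B\<phi> * indicator (bad K) x) \<partial>M)"
    proof (rule integral_mono_AE)
      show "integrable M (\<lambda>x. \<bar>indicator (W n) x * \<phi> (F n x + (h' x, h x)) * g x - indicator (W n) x * \<phi> (F n x + HK x) * g x\<bar>)"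
        using i1 i2 by simp
      show "integrable M (\<lambda>x. G0 * (\<eta> + 2 * B\<phi> * indicator (bad K) x))" by (rule iE)
      show "AE x in M. \<bar>indicator (W n) x * \<phi> (F n x + (h' x, h x)) * g x - indicator (W n) x * \<phi> (F n x + HK x) * g x\<bar>
          \<le> G0 * (\<eta> + 2 * B\<phi> * indicator (bad K) x)"
        using gb0 AE_space
      proof eventually_elim
        case (elim x)
        have "\<bar>indicator (W n) x * \<phi> (F n x + (h' x, h x)) * g x - indicator (W n) x * \<phi> (F n x + HK x) * g x\<bar>
            = indicator (W n) x * (\<bar>\<phi> (F n x + (h' x, h x)) - \<phi> (F n x + HK x)\<bar> * \<bar>g x\<bar>)"
          by (simp add: indicator_def abs_mult left_diff_distrib[symmetric])
        also have "\<dots> \<le> 1 * ((\<eta> + 2 * B\<phi> * indicator (bad K) x) * G0)"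
          using err[OF elim(2), of "F n x"] elim(1) \<eta> B0
          by (intro mult_mono) (auto simp: indicator_def intro: mult_mono)
        finally show ?case by (simp add: mult.commute)
      qed
    qed
    finally show ?thesis using intE by simp
  qed
  moreover have "\<bar>\<alpha> * (\<integral>x. (\<integral>z. \<phi> (z + (h' x, h x)) \<partial>PP) * g x \<partial>M) - d\<bar> \<le> \<epsilon>"
  proof -
    have pint: "integrable PP (\<lambda>z. \<phi> (z + c))" for c
      by (rule Q.integrable_const_bound[where B=B\<phi>]) (use \<phi>bd in auto)
    have b2: "integrable M (\<lambda>x. (\<integral>z. \<phi> (z + v x) \<partial>PP) * g x)" if [measurable]: "v \<in> borel_measurable M" for v
    proof (rule integrable_const_bound[where B="B\<phi> * G0"])
      show "AE x in M. norm ((\<integral>z. \<phi> (z + v x) \<partial>PP) * g x) \<le> B\<phi> * G0"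
        using gb0
      proof eventually_elim
        case (elim x)
        have "\<bar>\<integral>z. \<phi> (z + v x) \<partial>PP\<bar> \<le> (\<integral>z. \<bar>\<phi> (z + v x)\<bar> \<partial>PP)"
          using integral_norm_bound[of PP "\<lambda>z. \<phi> (z + v x)"] by simp
        also have "\<dots> \<le> (\<integral>z. B\<phi> \<partial>PP)"
          by (rule integral_mono) (use pint[of "v x"] \<phi>bd in auto)
        also have "\<dots> = B\<phi>" by (simp add: Q.prob_space)
        finally have "\<bar>\<integral>z. \<phi> (z + v x) \<partial>PP\<bar> \<le> B\<phi>" .
        then show ?case using elim B0 by (simp add: abs_mult mult_mono')
      qed
      show "(\<lambda>x. (\<integral>z. \<phi> (z + v x) \<partial>PP) * g x) \<in> borel_measurable M" by measurable
    qed
    have i1: "integrable M (\<lambda>x. (\<integral>z. \<phi> (z + (h' x, h x)) \<partial>PP) * g x)" by (rule b2) measurable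
    have i2: "integrable M (\<lambda>x. (\<integral>z. \<phi> (z + HK x) \<partial>PP) * g x)" by (rule b2) measurable
    have pw: "\<bar>(\<integral>z. \<phi> (z + (h' x, h x)) \<partial>PP) - (\<integral>z. \<phi> (z + HK x) \<partial>PP)\<bar> \<le> \<eta> + 2 * B\<phi> * indicator (bad K) x"
      if x: "x \<in> space M" for x
    proof -
      have "(\<integral>z. \<phi> (z + (h' x, h x)) \<partial>PP) - (\<integral>z. \<phi> (z + HK x) \<partial>PP) = (\<integral>z. \<phi> (z + (h' x, h x)) - \<phi> (z + HK x) \<partial>PP)"
        by (rule Bochner_Integration.integral_diff[OF pint pint, symmetric])
      also have "\<bar>\<dots>\<bar> \<le> (\<integral>z. \<bar>\<phi> (z + (h' x, h x)) - \<phi> (z + HK x)\<bar> \<partial>PP)"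
        using integral_norm_bound[of PP "\<lambda>z. \<phi> (z + (h' x, h x)) - \<phi> (z + HK x)"] by simp
      also have "\<dots> \<le> (\<integral>z. \<eta> + 2 * B\<phi> * indicator (bad K) x \<partial>PP)"
        by (rule integral_mono) (use pint err[OF x] in auto)
      also have "\<dots> = \<eta> + 2 * B\<phi> * indicator (bad K) x" by (simp add: Q.prob_space)
      finally show ?thesis .
    qed
    have XY: "\<bar>(\<integral>x. (\<integral>z. \<phi> (z + (h' x, h x)) \<partial>PP) * g x \<partial>M) - (\<integral>x. (\<integral>z. \<phi> (z + HK x) \<partial>PP) * g x \<partial>M)\<bar> \<le> \<epsilon>"
    proof -
      have "(\<integral>x. (\<integral>z. \<phi> (z + (h' x, h x)) \<partial>PP) * g x \<partial>M) - (\<integral>x. (\<integral>z. \<phi> (z + HK x) \<partial>PP) * g x \<partial>M)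
          = (\<integral>x. (\<integral>z. \<phi> (z + (h' x, h x)) \<partial>PP) * g x - (\<integral>z. \<phi> (z + HK x) \<partial>PP) * g x \<partial>M)"
        by (rule Bochner_Integration.integral_diff[OF i1 i2, symmetric])
      also have "\<bar>\<dots>\<bar> \<le> (\<integral>x. \<bar>(\<integral>z. \<phi> (z + (h' x, h x)) \<partial>PP) * g x - (\<integral>z. \<phi> (z + HK x) \<partial>PP) * g x\<bar> \<partial>M)"
        using integral_norm_bound[of M "\<lambda>x. (\<integral>z. \<phi> (z + (h' x, h x)) \<partial>PP) * g x - (\<integral>z. \<phi> (z + HK x) \<partial>PP) * g x"]
        by simp
      also have "\<dots> \<le> (\<integral>x. G0 * (\<eta> + 2 * B\<phi> * indicator (bad K) x) \<partial>M)"
      proof (rule integral_mono_AE)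
        show "integrable M (\<lambda>x. \<bar>(\<integral>z. \<phi> (z + (h' x, h x)) \<partial>PP) * g x - (\<integral>z. \<phi> (z + HK x) \<partial>PP) * g x\<bar>)"
          using i1 i2 by simp
        show "integrable M (\<lambda>x. G0 * (\<eta> + 2 * B\<phi> * indicator (bad K) x))" by (rule iE)
        show "AE x in M. \<bar>(\<integral>z. \<phi> (z + (h' x, h x)) \<partial>PP) * g x - (\<integral>z. \<phi> (z + HK x) \<partial>PP) * g x\<bar>
            \<le> G0 * (\<eta> + 2 * B\<phi> * indicator (bad K) x)"
          using gb0 AE_space
        proof eventually_elim
          case (elim x)
          have "\<bar>(\<integral>z. \<phi> (z + (h' x, h x)) \<partial>PP) * g x - (\<integral>z. \<phi> (z + HK x) \<partial>PP) * g x\<bar>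
              = \<bar>(\<integral>z. \<phi> (z + (h' x, h x)) \<partial>PP) - (\<integral>z. \<phi> (z + HK x) \<partial>PP)\<bar> * \<bar>g x\<bar>"
            by (simp add: abs_mult left_diff_distrib[symmetric])
          also have "\<dots> \<le> (\<eta> + 2 * B\<phi> * indicator (bad K) x) * G0"
            using pw[OF elim(2)] elim(1) by (intro mult_mono) auto
          finally show ?case by (simp add: mult.commute)
        qed
      qed
      finally show ?thesis using intE by simp
    qed
    have "\<bar>\<alpha> * (\<integral>x. (\<integral>z. \<phi> (z + (h' x, h x)) \<partial>PP) * g x \<partial>M) - d\<bar>
        = \<alpha> * \<bar>(\<integral>x. (\<integral>z. \<phi> (z + (h' x, h x)) \<partial>PP) * g x \<partial>M) - (\<integral>x. (\<integral>z. \<phi> (z + HK x) \<partial>PP) * g x \<partial>M)\<bar>"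
      unfolding d_def using \<alpha>pos by (simp add: abs_mult right_diff_distrib[symmetric])
    also have "\<dots> \<le> 1 * \<epsilon>" using XY \<alpha>1 \<alpha>pos by (intro mult_mono) auto
    finally show ?thesis by simp
  qed
  ultimately show "\<exists>c d. c \<longlonglongrightarrow> d \<and> (\<forall>n. \<bar>(\<integral>x. indicator (W n) x * \<phi> (F n x + (h' x, h x)) * g x \<partial>M) - c n\<bar> \<le> \<epsilon>) \<and>
      \<bar>\<alpha> * (\<integral>x. (\<integral>z. \<phi> (z + (h' x, h x)) \<partial>PP) * g x \<partial>M) - d\<bar> \<le> \<epsilon>"
    using cd by blast
qed

end


theorem theorem3p4:
  fixes M :: "'a::polish_space measure" and T :: "'a \<Rightarrow> 'a"
    and f :: "'a \<Rightarrow> real" and c :: real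
    and W :: "nat \<Rightarrow> 'a set" and q q' :: "nat \<Rightarrow> nat" and a a' :: "nat \<Rightarrow> real"
    and \<alpha> :: real and P :: "(real \<times> real) measure"
    and h h' g :: "'a \<Rightarrow> real" and \<phi> :: "real \<times> real \<Rightarrow> real"
  assumes std: "standard_borel_prob M"
    and aut: "mp_automorphism M T"
    and erg: "ergodic M T"
    and nonatom: "non_atomic M"
    and f_meas: "f \<in> borel_measurable M"
    and f_L2: "integrable M (\<lambda>x. (f x)\<^sup>2)"
    and c_pos: "c > 0"
    and f_ge: "AE x in M. f x \<ge> c"
    and W_sets: "\<And>n. W n \<in> sets M"
    and q_mono: "strict_mono q" and q'_mono: "strict_mono q'"
    and \<alpha>_pos: "0 < \<alpha>" and \<alpha>_le: "\<alpha> \<le> 1"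
    and P_prob: "prob_space P" and P_sets: "sets P = sets (borel :: (real \<times> real) measure)"
    and C1: "(\<lambda>n. measure M (W n)) \<longlonglongrightarrow> \<alpha>"
    and C2: "(\<lambda>n. measure M (symdiff (W n) (T -` W n \<inter> space M))) \<longlonglongrightarrow> 0"
    and C3: "rigidity_along M T q W"
    and C4: "rigidity_along M T q' W"
    and C5: "\<exists>B::real. \<forall>n. (\<integral>\<^sup>+x. indicator (W n) x *
               ennreal ((birkhoff_sum T f (q n) x - a n)\<^sup>2) \<partial>M) \<le> ennreal B"
    and C6: "\<exists>B::real. \<forall>n. (\<integral>\<^sup>+x. indicator (W n) x *
               ennreal ((birkhoff_sum T f (q' n) x - a' n)\<^sup>2) \<partial>M) \<le> ennreal B"
    and C7: "weak_conv_measures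
               (\<lambda>n. distr (cond_measure M (W n)) (borel :: (real \<times> real) measure)
                  (\<lambda>x. (birkhoff_sum T f (q' n) x - a' n, birkhoff_sum T f (q n) x - a n))) P"
    and h_meas: "h \<in> borel_measurable M" and h'_meas: "h' \<in> borel_measurable M"
    and g_meas: "g \<in> borel_measurable M"
    and g_Linf: "\<exists>B. AE x in M. \<bar>g x\<bar> \<le> B"
    and \<phi>_bdd: "bounded (range \<phi>)"
    and \<phi>_uc: "uniformly_continuous_on UNIV \<phi>"
  shows "(\<lambda>n. set_lebesgue_integral M (W n) (\<lambda>x.
            \<phi> (birkhoff_sum T f (q' n) x - a' n + h' x, birkhoff_sum T f (q n) x - a n + h x) * g x))
         \<longlonglongrightarrow> \<alpha> * (\<integral>x. (\<integral>tu. \<phi> (fst tu + h' x, snd tu + h x) * g x \<partial>P) \<partial>M)"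
proof -
  have PM: "prob_space M" using std by (simp add: standard_borel_prob_def)
  have Tm[measurable]: "T \<in> measurable M M" using aut by (simp add: mp_automorphism_def)
  note f_meas[measurable] h_meas[measurable] h'_meas[measurable] g_meas[measurable] W_sets[measurable]
  define F where "F n x = (birkhoff_sum T f (q' n) x - a' n, birkhoff_sum T f (q n) x - a n)" for n x
  have Fm: "F n \<in> borel_measurable M" for n unfolding F_def by measurable
  have Fsh: "F n (T x) = F n x + (f ((T ^^ q' n) x) - f x, f ((T ^^ q n) x) - f x)" for n x
    unfolding F_def by (simp add: bs_shift)
  have Fsh': "F n (T x) = F n x + (f ((T ^^ q' n) x) - f x, f ((T ^^ q n) x) - f x)" if "x \<in> space M" for n x
    by (rule Fsh)
  have C7': "weak_conv_measures (\<lambda>n. distr (cond_measure M (W n)) borel (F n)) P"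
    using C7 unfolding F_def[abs_def] .
  interpret thm_setup M T f W q q' \<alpha> F P
    by (rule thm_setup.intro[OF PM aut erg W_sets C1 \<alpha>_pos C2 f_meas C3 C4 Fm Fsh' C7' P_prob P_sets])
  obtain B\<phi> where B\<phi>: "\<And>z. \<bar>\<phi> z\<bar> \<le> B\<phi>" using \<phi>_bdd unfolding bounded_iff by auto
  obtain G where G: "AE x in M. \<bar>g x\<bar> \<le> G" using g_Linf by auto
  have lim: "(\<lambda>n. \<integral>x. indicator (W n) x * \<phi> (F n x + (h' x, h x)) * g x \<partial>M)
          \<longlonglongrightarrow> \<alpha> * (\<integral>x. (\<integral>z. \<phi> (z + (h' x, h x)) \<partial>P) * g x \<partial>M)"
    by (rule full_conv[OF B\<phi> \<phi>_uc h_meas h'_meas g_meas G \<alpha>_le])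
  have l: "set_lebesgue_integral M (W n) (\<lambda>x.
            \<phi> (birkhoff_sum T f (q' n) x - a' n + h' x, birkhoff_sum T f (q n) x - a n + h x) * g x)
      = (\<integral>x. indicator (W n) x * \<phi> (F n x + (h' x, h x)) * g x \<partial>M)" for n
    unfolding set_lebesgue_integral_def F_def by (simp add: mult.assoc)
  have r: "(\<integral>x. (\<integral>tu. \<phi> (fst tu + h' x, snd tu + h x) * g x \<partial>P) \<partial>M)
      = (\<integral>x. (\<integral>z. \<phi> (z + (h' x, h x)) \<partial>P) * g x \<partial>M)"
  proof (rule Bochner_Integration.integral_cong[OF refl])
    fix x
    have e: "(\<lambda>tu. \<phi> (fst tu + h' x, snd tu + h x)) = (\<lambda>z. \<phi> (z + (h' x, h x)))"
      by (rule ext) (simp add: plus_prod_def)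
    show "(\<integral>tu. \<phi> (fst tu + h' x, snd tu + h x) * g x \<partial>P) = (\<integral>z. \<phi> (z + (h' x, h x)) \<partial>P) * g x"
      by (subst integral_mult_left_zero) (simp add: e)
  qed
  show ?thesis unfolding l r by (rule lim)
qed

end
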